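(* Let $f,g\in L^\infty$, $z\in\mathbb{D}$, and $K=H_fT_g$. Then $$KT_{\phi_z}=T_{\tilde{\phi_z}}K-(H_fk_z)\otimes(H^*_gk_{\bar z}).$$
   Context: $\mathbb{D}$ is the open unit disk, $L^2$ the Lebesgue space on the unit circle, $H^2$ the Hardy space, $P:L^2\to H^2$ the orthogonal projection. For $h$ on the circle, $\tilde h(z)=h(\bar z)$ and $Uh(z)=\bar z\,\tilde h(z)$. For $f\in L^\infty$, $T_fh=P(fh)$ and $H_fh=PU(fh)$ for $h\in H^2$. For $z\in\mathbb{D}$, $k_z(w)=\frac{\sqrt{1-|z|^2}}{1-\bar z w}$ is the normalized reproducing kernel and $\phi_z(w)=\frac{z-w}{1-\bar z w}$. For $x,y$, $x\otimes y$ is the rank one operator $h\mapsto\langle h,y\rangle x$. *)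

theory Defs
  imports "HOL-Analysis.Analysis"
begin

definition circ :: "complex measure" where
  "circ = distr (uniform_measure lborel {0..2*pi}) borel cis"

(* L^2 and L^infinity of the circle (functions; equality in these spaces is a.e. equality) *)
definition L2 :: "(complex \<Rightarrow> complex) set" where
  "L2 = {h. h \<in> borel_measurable circ \<and> integrable circ (\<lambda>w. (cmod (h w))^2)}"

definition Linf :: "(complex \<Rightarrow> complex) set" where
  "Linf = {f. f \<in> borel_measurable circ \<and> (\<exists>C. AE w in circ. cmod (f w) \<le> C)}"

definition inner2 :: "(complex \<Rightarrow> complex) \<Rightarrow> (complex \<Rightarrow> complex) \<Rightarrow> complex" where
  "inner2 h k = integral\<^sup>L circ (\<lambda>w. h w * cnj (k w))"

(* Hardy space: L^2 functions whose negative Fourier coefficients vanish *)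
definition H2 :: "(complex \<Rightarrow> complex) set" where
  "H2 = {h \<in> L2. \<forall>n::nat. n \<ge> 1 \<longrightarrow> integral\<^sup>L circ (\<lambda>w. h w * w ^ n) = 0}"

(* orthogonal projection L^2 -> H^2 (a representative of the a.e.-class) *)
definition Pproj :: "(complex \<Rightarrow> complex) \<Rightarrow> (complex \<Rightarrow> complex)" where
  "Pproj h = (SOME g. g \<in> H2 \<and> (\<forall>k\<in>H2. inner2 (\<lambda>w. h w - g w) k = 0))"

definition tildeop :: "(complex \<Rightarrow> complex) \<Rightarrow> (complex \<Rightarrow> complex)" where
  "tildeop h = (\<lambda>w. h (cnj w))"

definition Uop :: "(complex \<Rightarrow> complex) \<Rightarrow> (complex \<Rightarrow> complex)" where
  "Uop h = (\<lambda>w. cnj w * tildeop h w)"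

definition Toep :: "(complex \<Rightarrow> complex) \<Rightarrow> (complex \<Rightarrow> complex) \<Rightarrow> (complex \<Rightarrow> complex)" where
  "Toep f h = Pproj (\<lambda>w. f w * h w)"

definition Hank :: "(complex \<Rightarrow> complex) \<Rightarrow> (complex \<Rightarrow> complex) \<Rightarrow> (complex \<Rightarrow> complex)" where
  "Hank f h = Pproj (Uop (\<lambda>w. f w * h w))"

definition adjH2 :: "((complex \<Rightarrow> complex) \<Rightarrow> (complex \<Rightarrow> complex)) \<Rightarrow> (complex \<Rightarrow> complex) \<Rightarrow> (complex \<Rightarrow> complex)" where
  "adjH2 A x = (SOME y. y \<in> H2 \<and> (\<forall>h\<in>H2. inner2 (A h) x = inner2 h y))"

definition kz :: "complex \<Rightarrow> complex \<Rightarrow> complex" where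
  "kz z = (\<lambda>w. complex_of_real (sqrt (1 - (cmod z)^2)) / (1 - cnj z * w))"

definition phiz :: "complex \<Rightarrow> complex \<Rightarrow> complex" where
  "phiz z = (\<lambda>w. (z - w) / (1 - cnj z * w))"

definition rank1 :: "(complex \<Rightarrow> complex) \<Rightarrow> (complex \<Rightarrow> complex) \<Rightarrow> (complex \<Rightarrow> complex) \<Rightarrow> (complex \<Rightarrow> complex)" where
  "rank1 x y h = (\<lambda>w. inner2 h y * x w)"

end

theory Submission
  imports Defs
begin


lemma cis_meas[measurable]: "cis \<in> borel_measurable borel"
  by (intro borel_measurable_continuous_onI continuous_intros)

lemma space_circ[simp]: "space circ = UNIV" and sets_circ[simp, measurable_cong]: "sets circ = sets borel"
  by (auto simp: circ_def)

lemma U_density: "uniform_measure lborel {0..2*pi} = density lborel (\<lambda>t. ennreal (indicator {0..2*pi} t / (2*pi)))"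
  unfolding uniform_measure_def
  by (intro density_cong) (auto simp: divide_ennreal[symmetric] emeasure_lborel_Icc split: split_indicator)

lemma circ_integral:
  fixes F :: "complex \<Rightarrow> complex"
  assumes [measurable]: "F \<in> borel_measurable borel"
  shows "integral\<^sup>L circ F = (\<integral>t. indicator {0..2*pi} t *\<^sub>R F (cis t) \<partial>lborel) / (2*pi)"
proof -
  have "integral\<^sup>L circ F = integral\<^sup>L (uniform_measure lborel {0..2*pi}) (\<lambda>t. F (cis t))"
    unfolding circ_def by (rule integral_distr) auto
  also have "\<dots> = (\<integral>t. (indicator {0..2*pi} t / (2*pi)) *\<^sub>R F (cis t) \<partial>lborel)"
    unfolding U_density by (rule integral_density) auto
  also have "\<dots> = (\<integral>t. (1/(2*pi)) *\<^sub>R (indicator {0..2*pi} t *\<^sub>R F (cis t)) \<partial>lborel)"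
    by (rule Bochner_Integration.integral_cong) auto
  also have "\<dots> = (\<integral>t. indicator {0..2*pi} t *\<^sub>R F (cis t) \<partial>lborel) / (2*pi)"
    by (simp add: scaleR_conv_of_real)
  finally show ?thesis .
qed

lemma emeasure_circ: "emeasure circ UNIV = 1"
proof -
  have "emeasure circ UNIV = emeasure (uniform_measure lborel {0..2*pi}) UNIV"
    unfolding circ_def by (subst emeasure_distr) auto
  also have "\<dots> = 1" by (simp add: emeasure_lborel_Icc divide_ennreal[symmetric])
  finally show ?thesis .
qed

lemma finite_circ: "finite_measure circ"
  by (rule finite_measureI) (simp add: emeasure_circ)

lemma AE_circle: "AE w in circ. cmod w = 1"
  unfolding circ_def by (subst AE_distr_iff) auto



lemma int_pow: "integral\<^sup>L circ (\<lambda>w. w^n) = (if n = 0 then 1 else 0)"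
proof (cases "n = 0")
  case True
  then show ?thesis using emeasure_circ by (simp add: measure_def)
next
  case False
  have "integral\<^sup>L circ (\<lambda>w. w^n) = (\<integral>t. indicator {0..2*pi} t *\<^sub>R cis (real n * t) \<partial>lborel) / (2*pi)"
    by (subst circ_integral) (auto intro!: Bochner_Integration.integral_cong arg_cong[where f="\<lambda>x. x / _"] simp: Complex.DeMoivre)
  also have "(\<integral>t. indicator {0..2*pi} t *\<^sub>R cis (real n * t) \<partial>lborel)
     = cis (real n * (2*pi)) / (\<i> * of_nat n) - cis (real n * 0) / (\<i> * of_nat n)"
  proof (rule integral_FTC_atLeastAtMost)
    fix x
    show "((\<lambda>t. cis (real n * t) / (\<i> * of_nat n)) has_vector_derivative cis (real n * x)) (at x within {0..2*pi})"
      unfolding has_vector_derivative_def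
      apply (rule has_derivative_eq_rhs)
       apply (rule derivative_eq_intros refl)+
      using False by (auto simp: fun_eq_iff field_simps scaleR_conv_of_real)
  qed (auto intro!: continuous_intros)
  also have "cis (real n * (2*pi)) = 1"
    by (metis Complex.DeMoivre cis_2pi power_one)
  finally show ?thesis using False by simp
qed



lemma cnj_meas[measurable]: "cnj \<in> borel_measurable borel"
  by (intro borel_measurable_continuous_onI continuous_intros)

lemma lborel_reflect: "distr lborel borel (\<lambda>x. 2*pi - x) = lborel"
proof -
  have "lborel = density (distr lborel borel (\<lambda>x. 2*pi + (-1) * x)) (\<lambda>_. ennreal \<bar>-1\<bar>)"
    by (rule lborel_real_affine) simp
  then show ?thesis by (simp add: density_1)
qed

lemma U_reflect: "distr (uniform_measure lborel {0..2*pi}) borel (\<lambda>x. 2*pi - x) = uniform_measure lborel {0..2*pi}"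
proof (rule measure_eqI)
  fix A :: "real set" assume A: "A \<in> sets (distr (uniform_measure lborel {0..2*pi}) borel (\<lambda>x. 2*pi - x))"
  then have [measurable]: "A \<in> sets borel" by simp
  have e: "{0..2*pi} \<inter> (\<lambda>x. 2*pi - x) -` A = (\<lambda>x. 2*pi - x) -` ({0..2*pi} \<inter> A)" by auto
  have "emeasure lborel ((\<lambda>x. 2*pi - x) -` ({0..2*pi} \<inter> A)) = emeasure lborel ({0..2*pi} \<inter> A)"
  proof -
    have "emeasure lborel ({0..2*pi} \<inter> A) = emeasure (distr lborel borel (\<lambda>x. 2*pi - x)) ({0..2*pi} \<inter> A)"
      by (simp add: lborel_reflect)
    also have "\<dots> = emeasure lborel ((\<lambda>x. 2*pi - x) -` ({0..2*pi} \<inter> A))"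
      by (subst emeasure_distr) auto
    finally show ?thesis by simp
  qed
  moreover have [measurable]: "(\<lambda>x. 2*pi - x) -` A \<in> sets borel"
    using measurable_sets[OF _ \<open>A \<in> sets borel\<close>, of "\<lambda>x::real. 2*pi - x" borel] by auto
  ultimately show "emeasure (distr (uniform_measure lborel {0..2*pi}) borel (\<lambda>x. 2*pi - x)) A = emeasure (uniform_measure lborel {0..2*pi}) A"
    apply (subst emeasure_distr, simp, simp)
    apply (subst emeasure_uniform_measure, simp, simp)
    apply (subst emeasure_uniform_measure, simp, simp)
    apply (simp only: e space_uniform_measure space_borel space_lborel Int_UNIV_right)
    done
qed simp

lemma circ_cnj: "distr circ borel cnj = circ"
proof -
  have "distr circ borel cnj = distr (uniform_measure lborel {0..2*pi}) borel (cnj \<circ> cis)"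
    unfolding circ_def by (subst distr_distr) auto
  also have "cnj \<circ> cis = cis \<circ> (\<lambda>x. 2*pi - x)"
  proof
    fix t
    have "cis (2*pi - t) = cis (-t)" by (simp add: complex_eq_iff)
    then show "(cnj \<circ> cis) t = (cis \<circ> (\<lambda>x. 2*pi - x)) t" by (simp add: cis_cnj)
  qed
  also have "distr (uniform_measure lborel {0..2*pi}) borel (cis \<circ> (\<lambda>x. 2*pi - x))
      = distr (distr (uniform_measure lborel {0..2*pi}) borel (\<lambda>x. 2*pi - x)) borel cis"
    by (subst distr_distr) auto
  also have "\<dots> = circ" unfolding U_reflect circ_def ..
  finally show ?thesis .
qed

lemma integral_cnj_circ:
  fixes F :: "complex \<Rightarrow> 'b::{banach, second_countable_topology}"
  assumes [measurable]: "F \<in> borel_measurable borel"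
  shows "integral\<^sup>L circ (\<lambda>w. F (cnj w)) = integral\<^sup>L circ F"
proof -
  have "integral\<^sup>L circ F = integral\<^sup>L (distr circ borel cnj) F" by (simp add: circ_cnj)
  also have "\<dots> = integral\<^sup>L circ (\<lambda>w. F (cnj w))" by (rule integral_distr) auto
  finally show ?thesis by simp
qed

lemma integrable_cnj_circ:
  fixes F :: "complex \<Rightarrow> 'b::{banach, second_countable_topology}"
  assumes [measurable]: "F \<in> borel_measurable borel"
  shows "integrable circ (\<lambda>w. F (cnj w)) \<longleftrightarrow> integrable circ F"
proof -
  have "integrable circ F = integrable (distr circ borel cnj) F" by (simp add: circ_cnj)
  also have "\<dots> = integrable circ (\<lambda>w. F (cnj w))" by (rule integrable_distr_eq) auto
  finally show ?thesis by simp
qed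

lemma AE_cnj_circ:
  assumes [measurable]: "Measurable.pred borel P"
  shows "(AE w in circ. P (cnj w)) \<longleftrightarrow> (AE w in circ. P w)"
proof -
  have "(AE w in circ. P w) = (AE w in distr circ borel cnj. P w)" by (simp only: circ_cnj)
  also have "\<dots> = (AE w in circ. P (cnj w))" by (rule AE_distr_iff) auto
  finally show ?thesis by simp
qed



definition N2 :: "(complex \<Rightarrow> complex) \<Rightarrow> real" where
  "N2 h = integral\<^sup>L circ (\<lambda>w. (cmod (h w))^2)"

lemma L2_meas[measurable_dest]: "h \<in> L2 \<Longrightarrow> h \<in> borel_measurable borel"
  by (auto simp: L2_def)

lemma L2_meas': "h \<in> L2 \<Longrightarrow> h \<in> borel_measurable circ"
  by (auto simp: L2_def)

lemma L2_int: "h \<in> L2 \<Longrightarrow> integrable circ (\<lambda>w. (cmod (h w))^2)"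
  by (auto simp: L2_def)

lemma L2I: "h \<in> borel_measurable borel \<Longrightarrow> integrable circ (\<lambda>w. (cmod (h w))^2) \<Longrightarrow> h \<in> L2"
  by (auto simp: L2_def)

lemma fin_circ: "emeasure circ (space circ) \<noteq> \<infinity>"
  by (simp add: emeasure_circ)

lemma integrable_const_circ[simp]: "integrable circ (\<lambda>w. c::real)"
  using finite_circ finite_measure.integrable_const by blast

lemma integrable_const_circ_c[simp]: "integrable circ (\<lambda>w. c::complex)"
  using finite_circ finite_measure.integrable_const by blast

lemma measure_circ[simp]: "measure circ UNIV = 1"
  by (simp add: measure_def emeasure_circ)

lemma L2_bounded:
  assumes [measurable]: "h \<in> borel_measurable borel" and b: "AE w in circ. cmod (h w) \<le> C"
  shows "h \<in> L2"
proof (rule L2I)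
  show "integrable circ (\<lambda>w. (cmod (h w))^2)"
  proof (rule Bochner_Integration.integrable_bound[OF integrable_const_circ[of "C^2"]])
    show "AE w in circ. norm ((cmod (h w))^2) \<le> norm (C^2)"
      using b by eventually_elim (auto intro!: power_mono simp: abs_le_iff)
  qed auto
qed simp

lemma L2_add:
  assumes "h \<in> L2" "k \<in> L2" shows "(\<lambda>w. h w + k w) \<in> L2"
proof (rule L2I)
  have [measurable]: "h \<in> borel_measurable borel" "k \<in> borel_measurable borel" using assms by auto
  show "(\<lambda>w. h w + k w) \<in> borel_measurable borel" by measurable
  show "integrable circ (\<lambda>w. (cmod (h w + k w))^2)"
  proof (rule Bochner_Integration.integrable_bound)
    show "integrable circ (\<lambda>w. 2 * (cmod (h w))^2 + 2 * (cmod (k w))^2)"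
      using assms by (auto intro!: L2_int)
    show "AE w in circ. norm ((cmod (h w + k w))^2) \<le> norm (2 * (cmod (h w))^2 + 2 * (cmod (k w))^2)"
    proof (intro AE_I2)
      fix w
      have "cmod (h w + k w) \<le> cmod (h w) + cmod (k w)" by (rule norm_triangle_ineq)
      then have "(cmod (h w + k w))^2 \<le> (cmod (h w) + cmod (k w))^2" by (intro power_mono) auto
      also have "\<dots> \<le> 2 * (cmod (h w))^2 + 2 * (cmod (k w))^2"
        by (smt (verit, ccfv_threshold) sum_squares_bound power2_sum)
      finally show "norm ((cmod (h w + k w))^2) \<le> norm (2 * (cmod (h w))^2 + 2 * (cmod (k w))^2)"
        by simp
    qed
  qed measurable
qed

lemma L2_bdd_mult:
  assumes [measurable]: "f \<in> borel_measurable borel" and b: "AE w in circ. cmod (f w) \<le> C"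
    and h: "h \<in> L2"
  shows "(\<lambda>w. f w * h w) \<in> L2"
proof (rule L2I)
  have [measurable]: "h \<in> borel_measurable borel" using h by auto
  show "(\<lambda>w. f w * h w) \<in> borel_measurable borel" by measurable
  show "integrable circ (\<lambda>w. (cmod (f w * h w))^2)"
  proof (rule Bochner_Integration.integrable_bound)
    show "integrable circ (\<lambda>w. C^2 * (cmod (h w))^2)"
      using h by (auto intro!: L2_int)
    show "AE w in circ. norm ((cmod (f w * h w))^2) \<le> norm (C^2 * (cmod (h w))^2)"
      using b
    proof eventually_elim
      fix w assume "cmod (f w) \<le> C"
      then have "(cmod (f w))^2 \<le> C^2" by (intro power_mono) auto
      then have "(cmod (f w))^2 * (cmod (h w))^2 \<le> C^2 * (cmod (h w))^2"
        by (intro mult_right_mono) auto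
      then show "norm ((cmod (f w * h w))^2) \<le> norm (C^2 * (cmod (h w))^2)"
        by (simp add: norm_mult power_mult_distrib)
    qed
  qed measurable
qed

lemma L2_cmult: "h \<in> L2 \<Longrightarrow> (\<lambda>w. c * h w) \<in> L2"
  by (rule L2_bdd_mult[of "\<lambda>_. c" "cmod c"]) auto

lemma L2_uminus: "h \<in> L2 \<Longrightarrow> (\<lambda>w. - h w) \<in> L2"
  using L2_cmult[of h "-1"] by simp

lemma L2_diff: "h \<in> L2 \<Longrightarrow> k \<in> L2 \<Longrightarrow> (\<lambda>w. h w - k w) \<in> L2"
  using L2_add[of h "\<lambda>w. - k w"] L2_uminus[of k] by simp

lemma L2_zero: "(\<lambda>w. 0) \<in> L2"
  by (rule L2_bounded[of _ 0]) auto

lemma L2_cnj: "h \<in> L2 \<Longrightarrow> (\<lambda>w. cnj (h w)) \<in> L2"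
  by (auto simp: L2_def)

lemma L2_tilde: assumes "h \<in> L2" shows "tildeop h \<in> L2"
proof (rule L2I)
  have [measurable]: "h \<in> borel_measurable borel" using assms by auto
  show "tildeop h \<in> borel_measurable borel" unfolding tildeop_def by measurable
  show "integrable circ (\<lambda>w. (cmod (tildeop h w))^2)"
    unfolding tildeop_def using integrable_cnj_circ[of "\<lambda>w. ((cmod (h w))^2)"]
    using L2_int[OF assms] by simp
qed

lemma L2_U: assumes "h \<in> L2" shows "Uop h \<in> L2"
  unfolding Uop_def
  by (rule L2_bdd_mult[of cnj 1]) (use AE_circle L2_tilde[OF assms] in auto)

lemma Linf_meas[measurable_dest]: "f \<in> Linf \<Longrightarrow> f \<in> borel_measurable borel"
  by (auto simp: Linf_def)

lemma Linf_mult: "f \<in> Linf \<Longrightarrow> h \<in> L2 \<Longrightarrow> (\<lambda>w. f w * h w) \<in> L2"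
  unfolding Linf_def using L2_bdd_mult by auto

lemma Linf_cnj: "f \<in> Linf \<Longrightarrow> (\<lambda>w. cnj (f w)) \<in> Linf"
  unfolding Linf_def by auto

lemma ab_le_sq: fixes a b :: real assumes "a \<ge> 0" "b \<ge> 0" shows "a * b \<le> a^2 + b^2"
proof (cases "a \<le> b")
  case True
  then have "a * b \<le> b * b" using assms by (intro mult_right_mono) auto
  then show ?thesis by (simp add: power2_eq_square) (smt (verit) zero_le_square)
next
  case False
  then have "a * b \<le> a * a" using assms by (intro mult_left_mono) auto
  then show ?thesis by (simp add: power2_eq_square) (smt (verit) zero_le_square)
qed

lemma int_inner:
  assumes "h \<in> L2" "k \<in> L2" shows "integrable circ (\<lambda>w. h w * cnj (k w))"
proof (rule Bochner_Integration.integrable_bound)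
  have [measurable]: "h \<in> borel_measurable borel" "k \<in> borel_measurable borel" using assms by auto
  show "integrable circ (\<lambda>w. (cmod (h w))^2 + (cmod (k w))^2)"
    using assms by (auto intro!: L2_int)
  show "AE w in circ. norm (h w * cnj (k w)) \<le> norm ((cmod (h w))^2 + (cmod (k w))^2)"
  proof (intro AE_I2)
    fix w
    have "cmod (h w) * cmod (k w) \<le> (cmod (h w))^2 + (cmod (k w))^2"
      by (rule ab_le_sq) auto
    then show "norm (h w * cnj (k w)) \<le> norm ((cmod (h w))^2 + (cmod (k w))^2)"
      by (simp add: norm_mult)
  qed
  show "(\<lambda>w. h w * cnj (k w)) \<in> borel_measurable circ" by measurable
qed

lemma inner2_add_left: "h \<in> L2 \<Longrightarrow> k \<in> L2 \<Longrightarrow> l \<in> L2 \<Longrightarrow>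
   inner2 (\<lambda>w. h w + k w) l = inner2 h l + inner2 k l"
  unfolding inner2_def by (simp add: distrib_right int_inner)

lemma inner2_diff_left: "h \<in> L2 \<Longrightarrow> k \<in> L2 \<Longrightarrow> l \<in> L2 \<Longrightarrow>
   inner2 (\<lambda>w. h w - k w) l = inner2 h l - inner2 k l"
  unfolding inner2_def by (simp add: left_diff_distrib int_inner)

lemma inner2_cmult_left: "inner2 (\<lambda>w. c * h w) l = c * inner2 h l"
  unfolding inner2_def by (simp add: mult.assoc)

lemma inner2_cnj: "inner2 k h = cnj (inner2 h k)"
proof -
  have "cnj (inner2 h k) = (CLINT w|circ. cnj (h w * cnj (k w)))"
    unfolding inner2_def by (rule Bochner_Integration.integral_cnj[symmetric])
  then show ?thesis unfolding inner2_def by (simp add: mult.commute)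
qed

lemma inner2_add_right: "h \<in> L2 \<Longrightarrow> k \<in> L2 \<Longrightarrow> l \<in> L2 \<Longrightarrow>
   inner2 l (\<lambda>w. h w + k w) = inner2 l h + inner2 l k"
  by (subst (1 2 3) inner2_cnj) (simp add: inner2_add_left)

lemma inner2_diff_right: "h \<in> L2 \<Longrightarrow> k \<in> L2 \<Longrightarrow> l \<in> L2 \<Longrightarrow>
   inner2 l (\<lambda>w. h w - k w) = inner2 l h - inner2 l k"
  by (subst (1 2 3) inner2_cnj) (simp add: inner2_diff_left)

lemma inner2_cmult_right: "inner2 l (\<lambda>w. c * h w) = cnj c * inner2 l h"
  by (subst (1 2) inner2_cnj) (simp add: inner2_cmult_left)

lemma inner2_cong_left:
  assumes [measurable]: "h \<in> borel_measurable borel" "h' \<in> borel_measurable borel" "k \<in> borel_measurable borel"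
    and "AE w in circ. h w = h' w"
  shows "inner2 h k = inner2 h' k"
  unfolding inner2_def by (rule integral_cong_AE) (use assms(4) in auto)

lemma inner2_cong_right:
  assumes [measurable]: "h \<in> borel_measurable borel" "h' \<in> borel_measurable borel" "k \<in> borel_measurable borel"
    and "AE w in circ. h w = h' w"
  shows "inner2 k h = inner2 k h'"
  using inner2_cong_left[OF assms] by (metis inner2_cnj)

lemma inner2_self: "inner2 h h = complex_of_real (N2 h)"
  unfolding inner2_def N2_def
proof -
  have "(CLINT w|circ. h w * cnj (h w)) = (CLINT w|circ. complex_of_real ((cmod (h w))^2))"
    by (simp only: complex_norm_square)
  also have "\<dots> = complex_of_real (LINT w|circ. (cmod (h w))^2)"
    by (rule integral_complex_of_real)
  finally show "(CLINT w|circ. h w * cnj (h w)) = complex_of_real (LINT w|circ. (cmod (h w))^2)" .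
qed

lemma N2_nonneg: "N2 h \<ge> 0"
  unfolding N2_def by simp

lemma N2_zero:
  assumes "h \<in> L2" "N2 h = 0" shows "AE w in circ. h w = 0"
proof -
  have "AE w in circ. (cmod (h w))^2 = 0"
    using assms by (subst integral_nonneg_eq_0_iff_AE[symmetric]) (auto simp: N2_def L2_int)
  then show ?thesis by auto
qed

lemma inner2_zero_AE:
  assumes "h \<in> L2" "inner2 h h = 0" shows "AE w in circ. h w = 0"
  using assms N2_zero by (simp add: inner2_self)



lemma L2_integrable: assumes "h \<in> L2" shows "integrable circ h"
proof (rule Bochner_Integration.integrable_bound)
  show "integrable circ (\<lambda>w. 1 + (cmod (h w))^2)" using L2_int[OF assms] by simp
  show "AE w in circ. norm (h w) \<le> norm (1 + (cmod (h w))^2)"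
  proof (intro AE_I2)
    fix w show "norm (h w) \<le> norm (1 + (cmod (h w))^2)"
      using ab_le_sq[of 1 "cmod (h w)"] by (simp add: power2_eq_square)
  qed
  show "h \<in> borel_measurable circ" using assms by (simp add: L2_meas')
qed

lemma integrable_bdd_mult:
  assumes "integrable circ h" and [measurable]: "e \<in> borel_measurable borel"
    and b: "AE w in circ. cmod (e w) \<le> C"
  shows "integrable circ (\<lambda>w. h w * e w)"
proof (rule Bochner_Integration.integrable_bound)
  show "integrable circ (\<lambda>w. C * cmod (h w))" using assms(1) by simp
  have [measurable]: "h \<in> borel_measurable borel" using borel_measurable_integrable[OF assms(1)] by simp
  show "(\<lambda>w. h w * e w) \<in> borel_measurable circ" by measurable
  show "AE w in circ. norm (h w * e w) \<le> norm (C * cmod (h w))"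
    using b by eventually_elim (auto simp: norm_mult abs_mult mult.commute intro!: mult_right_mono)
qed

lemma AE_circ_pow: "AE w in circ. cmod (w^n) \<le> 1"
  using AE_circle by eventually_elim (simp add: norm_power)

lemma AE_circ_cnjpow: "AE w in circ. cmod (cnj w^n) \<le> 1"
  using AE_circle by eventually_elim (simp add: norm_power)

lemma H2_L2: "h \<in> H2 \<Longrightarrow> h \<in> L2" by (simp add: H2_def)

lemma H2_mom: "h \<in> H2 \<Longrightarrow> n \<ge> 1 \<Longrightarrow> integral\<^sup>L circ (\<lambda>w. h w * w ^ n) = 0"
  by (simp add: H2_def)

lemma int_pow_mult: "h \<in> L2 \<Longrightarrow> integrable circ (\<lambda>w. h w * w ^ n)"
  by (rule integrable_bdd_mult[OF L2_integrable _ AE_circ_pow]) auto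

lemma H2_add: assumes "h \<in> H2" "k \<in> H2" shows "(\<lambda>w. h w + k w) \<in> H2"
  using assms unfolding H2_def
  by (auto intro!: L2_add simp: distrib_right int_pow_mult)

lemma H2_diff: assumes "h \<in> H2" "k \<in> H2" shows "(\<lambda>w. h w - k w) \<in> H2"
  using assms unfolding H2_def
  by (auto intro!: L2_diff simp: left_diff_distrib int_pow_mult)

lemma H2_cmult: assumes "h \<in> H2" shows "(\<lambda>w. c * h w) \<in> H2"
  using assms unfolding H2_def
  by (auto intro!: L2_cmult simp: mult.assoc)

lemma H2_zero: "(\<lambda>w. 0) \<in> H2"
  unfolding H2_def by (auto intro!: L2_zero)

lemma N2_cong:
  assumes "h \<in> L2" "k \<in> L2" "AE w in circ. h w = k w" shows "N2 h = N2 k"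
  unfolding N2_def using assms by (intro integral_cong_AE) (auto simp: L2_meas')



lemma N2_int_enn:
  assumes "h \<in> L2" shows "(\<integral>\<^sup>+w. ennreal ((cmod (h w))^2) \<partial>circ) = ennreal (N2 h)"
  unfolding N2_def using L2_int[OF assms] by (subst nn_integral_eq_integral) auto

lemma pow_small: "e > 0 \<Longrightarrow> \<exists>j. ((1/8::real)^j) < e"
proof -
  assume "e > 0"
  have "(\<lambda>j. (1/8::real)^j) \<longlonglongrightarrow> 0" by (rule LIMSEQ_power_zero) simp
  then have "eventually (\<lambda>j. (1/8::real)^j < e) sequentially" using \<open>e > 0\<close> by (rule order_tendstoD)
  then show ?thesis by (meson eventually_sequentially order_refl)
qed

theorem L2_complete:
  assumes g: "\<And>n. g n \<in> L2"
    and C: "\<And>e. e > 0 \<Longrightarrow> \<exists>N. \<forall>m\<ge>N. \<forall>n\<ge>N. N2 (\<lambda>w. g m w - g n w) < e"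
  shows "\<exists>G \<in> L2. (\<lambda>n. N2 (\<lambda>w. g n w - G w)) \<longlonglongrightarrow> 0"
proof -
  have [measurable]: "g n \<in> borel_measurable borel" for n using g by auto
  have "\<forall>j. \<exists>N. \<forall>m\<ge>N. \<forall>n\<ge>N. N2 (\<lambda>w. g m w - g n w) < (1/8::real)^j"
    using C by simp
  then obtain Nf where Nf: "\<And>j m n. m \<ge> Nf j \<Longrightarrow> n \<ge> Nf j \<Longrightarrow> N2 (\<lambda>w. g m w - g n w) < (1/8::real)^j"
    by metis
  define s where "s j = Max (Nf ` {..j}) + j" for j
  have sN: "Nf i \<le> s j" if "i \<le> j" for i j
  proof -
    have "Nf i \<le> Max (Nf ` {..j})" using that by (intro Max_ge) auto
    then show ?thesis unfolding s_def by simp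
  qed
  define d where "d j = (\<lambda>w. g (s (Suc j)) w - g (s j) w)" for j
  have dL2: "d j \<in> L2" for j unfolding d_def using g by (intro L2_diff)
  have [measurable]: "d j \<in> borel_measurable borel" for j using dL2 by auto
  have dN: "N2 (d j) < (1/8)^j" for j unfolding d_def by (intro Nf sN) auto
  define A where "A j = {w \<in> space circ. (1/4::real)^j \<le> (cmod (d j w))^2}" for j
  have A_sets[measurable]: "A j \<in> sets circ" for j unfolding A_def by measurable
  have mA: "measure circ (A j) \<le> (1/2)^j" for j
  proof -
    have "measure circ (A j) \<le> integral\<^sup>L circ (\<lambda>w. (cmod (d j w))^2) / (1/4)^j"
      unfolding A_def
      by (rule integral_Markov_inequality_measure[where A="space circ"]) (auto intro: L2_int dL2)
    also have "\<dots> = N2 (d j) * 4^j" by (simp add: N2_def power_one_over)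
    also have "\<dots> \<le> (1/8)^j * 4^j" using dN[of j] by (intro mult_right_mono) auto
    also have "\<dots> = (1/2)^j" by (subst power_mult_distrib[symmetric]) simp
    finally show ?thesis .
  qed
  have sumA: "summable (\<lambda>j. measure circ (A j))"
    by (rule summable_comparison_test[where g="\<lambda>j. (1/2::real)^j"]) (auto intro: mA)
  have "AE w in circ. eventually (\<lambda>j. w \<in> space circ - A j) sequentially"
    by (rule borel_cantelli_AE1[OF A_sets _ sumA])
       (use finite_circ finite_measure.emeasure_finite in \<open>auto simp: less_top\<close>)
  then have AEconv: "AE w in circ. convergent (\<lambda>k. g (s k) w)"
  proof eventually_elim
    case (elim w)
    have ev: "eventually (\<lambda>j. norm (d j w) \<le> (1/2)^j) sequentially"
      using elim
    proof eventually_elim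
      case (elim j)
      have e: "((1/2::real)^j)^2 = (1/4)^j"
      proof -
        have "((1/2::real)^j)^2 = ((1/2)^2)^j" by (metis power_mult mult.commute)
        also have "(1/2::real)^2 = 1/4" by (simp add: power2_eq_square)
        finally show ?thesis .
      qed
      have "\<not> ((1/4::real)^j \<le> (cmod (d j w))^2)" using elim unfolding A_def by blast
      then have "(cmod (d j w))^2 < ((1/2::real)^j)^2"
        unfolding e by (simp only: not_le)
      then have "cmod (d j w) < (1/2::real)^j"
        by (rule power_less_imp_less_base) (rule zero_le_power, simp)
      then show ?case by simp

    qed
    have "summable (\<lambda>j. d j w)"
      by (rule summable_comparison_test_ev[OF ev]) simp
    then have "convergent (\<lambda>k. g (s 0) w + (\<Sum>j<k. d j w))"
      by (simp add: summable_iff_convergent convergent_add_const_iff)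
    moreover have "(\<lambda>k. g (s 0) w + (\<Sum>j<k. d j w)) = (\<lambda>k. g (s k) w)"
      unfolding d_def by (simp add: sum_lessThan_telescope[where f="\<lambda>j. g (s j) w"])
    ultimately show ?case by simp
  qed
  define G where "G w = lim (\<lambda>k. g (s k) w)" for w
  have [measurable]: "G \<in> borel_measurable borel" unfolding G_def by measurable
  have AElim: "AE w in circ. (\<lambda>k. g (s k) w) \<longlonglongrightarrow> G w"
    using AEconv by eventually_elim (simp add: G_def convergent_LIMSEQ_iff)
  have main: "(\<lambda>w. g n w - G w) \<in> L2 \<and> N2 (\<lambda>w. g n w - G w) \<le> (1/8)^j" if nj: "n \<ge> Nf j" for n j
  proof -
    define u where "u k w = ennreal ((cmod (g n w - g (s k) w))^2)" for k w
    have [measurable]: "u k \<in> borel_measurable circ" for k unfolding u_def by measurable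
    have "AE w in circ. liminf (\<lambda>k. u k w) = ennreal ((cmod (g n w - G w))^2)"
      using AElim
    proof eventually_elim
      case (elim w)
      have "(\<lambda>k. u k w) \<longlonglongrightarrow> ennreal ((cmod (g n w - G w))^2)"
        unfolding u_def by (intro tendsto_ennrealI tendsto_intros elim)
      then show ?case by (intro lim_imp_Liminf) auto
    qed
    then have "(\<integral>\<^sup>+w. ennreal ((cmod (g n w - G w))^2) \<partial>circ) = (\<integral>\<^sup>+w. liminf (\<lambda>k. u k w) \<partial>circ)"
      by (intro nn_integral_cong_AE) auto
    also have "\<dots> \<le> liminf (\<lambda>k. integral\<^sup>N circ (u k))"
      by (rule nn_integral_liminf) measurable
    also have "\<dots> \<le> ennreal ((1/8)^j)"
    proof (rule Liminf_le)
      show "eventually (\<lambda>k. integral\<^sup>N circ (u k) \<le> ennreal ((1/8)^j)) sequentially"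
        unfolding eventually_sequentially
      proof (intro exI allI impI)
        fix k assume "j \<le> k"
        have "integral\<^sup>N circ (u k) = ennreal (N2 (\<lambda>w. g n w - g (s k) w))"
          unfolding u_def by (rule N2_int_enn) (intro L2_diff g)
        also have "\<dots> \<le> ennreal ((1/8)^j)"
          using Nf[OF nj sN[OF \<open>j \<le> k\<close>]] by (intro ennreal_leI) simp
        finally show "integral\<^sup>N circ (u k) \<le> ennreal ((1/8)^j)" .
      qed
    qed simp
    finally have fin: "(\<integral>\<^sup>+w. ennreal ((cmod (g n w - G w))^2) \<partial>circ) \<le> ennreal ((1/8)^j)" .
    have int: "integrable circ (\<lambda>w. (cmod (g n w - G w))^2)"
      unfolding integrable_iff_bounded using fin by (auto simp: less_top[symmetric] top_unique)
    then have L: "(\<lambda>w. g n w - G w) \<in> L2" by (intro L2I) auto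
    have "ennreal (N2 (\<lambda>w. g n w - G w)) \<le> ennreal ((1/8)^j)"
      using fin N2_int_enn[OF L] by simp
    then have "N2 (\<lambda>w. g n w - G w) \<le> (1/8)^j"
      by (subst (asm) ennreal_le_iff) auto
    with L show ?thesis by simp
  qed
  have GL2: "G \<in> L2"
  proof -
    have "(\<lambda>w. g (Nf 0) w - (g (Nf 0) w - G w)) \<in> L2"
      using L2_diff[OF g[of "Nf 0"] conjunct1[OF main[of 0 "Nf 0"]]] by simp
    then show ?thesis by simp
  qed
  have "(\<lambda>n. N2 (\<lambda>w. g n w - G w)) \<longlonglongrightarrow> 0"
  proof (rule LIMSEQ_I)
    fix e :: real assume "e > 0"
    then obtain j where j: "(1/8::real)^j < e" using pow_small by blast
    show "\<exists>N. \<forall>n\<ge>N. norm (N2 (\<lambda>w. g n w - G w) - 0) < e"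
    proof (intro exI allI impI)
      fix n assume "Nf j \<le> n"
      then show "norm (N2 (\<lambda>w. g n w - G w) - 0) < e"
        using main[of j n] j N2_nonneg by auto
    qed
  qed
  with GL2 show ?thesis by blast
qed



lemma N2_sub_scaled:
  assumes v: "v \<in> L2" and k: "k \<in> L2"
  shows "N2 (\<lambda>w. v w - c * k w) = N2 v - 2 * Re (cnj c * inner2 v k) + (cmod c)^2 * N2 k"
proof -
  have ck: "(\<lambda>w. c * k w) \<in> L2" using k by (rule L2_cmult)
  have vck: "(\<lambda>w. v w - c * k w) \<in> L2" using v ck by (rule L2_diff)
  have "complex_of_real (N2 (\<lambda>w. v w - c * k w)) = inner2 (\<lambda>w. v w - c * k w) (\<lambda>w. v w - c * k w)"
    by (simp add: inner2_self)
  also have "\<dots> = inner2 v v - cnj c * inner2 v k - c * inner2 k v + c * cnj c * inner2 k k"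
    using v k ck vck
    by (simp add: inner2_diff_left inner2_diff_right inner2_cmult_left inner2_cmult_right algebra_simps)
  also have "\<dots> = complex_of_real (N2 v - 2 * Re (cnj c * inner2 v k) + (cmod c)^2 * N2 k)"
    apply (subst inner2_cnj[of k v])
    apply (simp add: inner2_self complex_eq_iff)
    apply (simp add: cmod_power2 algebra_simps power2_eq_square)
    apply (rule disjI2)
    apply (metis cmod_power2 power2_eq_square add.commute)
    done
  finally show ?thesis by (simp only: of_real_eq_iff)
qed

lemma N2_cmult: "N2 (\<lambda>w. c * h w) = (cmod c)^2 * N2 h"
  unfolding N2_def by (simp add: norm_mult power_mult_distrib)

lemma sq_split: fixes a b :: complex and t :: real assumes "t > 0"
  shows "(cmod (a + b))^2 \<le> (1 + t) * (cmod a)^2 + (1 + 1/t) * (cmod b)^2"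
proof -
  have "(cmod (a + b))^2 \<le> (cmod a + cmod b)^2"
    by (intro power_mono norm_triangle_ineq) auto
  also have "\<dots> = (cmod a)^2 + 2 * cmod a * cmod b + (cmod b)^2" by (simp add: power2_sum)
  also have "2 * cmod a * cmod b \<le> t * (cmod a)^2 + (1/t) * (cmod b)^2"
  proof -
    have "0 \<le> (t * cmod a - cmod b)^2" by simp
    then have "2 * t * cmod a * cmod b \<le> t^2 * (cmod a)^2 + (cmod b)^2"
      by (simp add: power2_diff power_mult_distrib)
    then have "(2 * cmod a * cmod b) * t \<le> (t * (cmod a)^2 + (1/t) * (cmod b)^2) * t"
      using assms by (simp add: algebra_simps power2_eq_square)
    then show ?thesis using assms by (simp only: mult_le_cancel_right)
  qed
  finally show ?thesis by (simp add: algebra_simps)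
qed

lemma N2_split:
  assumes "a \<in> L2" "b \<in> L2" "t > 0"
  shows "N2 (\<lambda>w. a w + b w) \<le> (1 + t) * N2 a + (1 + 1/t) * N2 b"
proof -
  have "N2 (\<lambda>w. a w + b w) \<le> integral\<^sup>L circ (\<lambda>w. (1 + t) * (cmod (a w))^2 + (1 + 1/t) * (cmod (b w))^2)"
    unfolding N2_def
    by (intro integral_mono sq_split assms L2_int L2_add Bochner_Integration.integrable_add integrable_mult_right)
  also have "\<dots> = (1 + t) * N2 a + (1 + 1/t) * N2 b"
    unfolding N2_def using assms by (simp add: L2_int)
  finally show ?thesis .
qed

lemma moment_small:
  assumes v: "v \<in> L2" and e: "e > 0"
  shows "cmod (integral\<^sup>L circ (\<lambda>w. v w * w^m)) \<le> N2 v / (2*e) + e/2"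
proof -
  have [measurable]: "v \<in> borel_measurable borel" using v by auto
  have "cmod (integral\<^sup>L circ (\<lambda>w. v w * w^m)) \<le> integral\<^sup>L circ (\<lambda>w. norm (v w * w^m))"
    by (rule integral_norm_bound)
  also have "\<dots> \<le> integral\<^sup>L circ (\<lambda>w. (cmod (v w))^2 / (2*e) + e/2)"
  proof (rule integral_mono_AE)
    show "integrable circ (\<lambda>w. norm (v w * w^m))" using int_pow_mult[OF v] by simp
    show "integrable circ (\<lambda>w. (cmod (v w))^2 / (2*e) + e/2)" using L2_int[OF v] by simp
    show "AE w in circ. norm (v w * w^m) \<le> (cmod (v w))^2 / (2*e) + e/2"
      using AE_circle
    proof eventually_elim
      case (elim w)
      have "0 \<le> (cmod (v w) - e)^2" by simp
      then have "2 * e * cmod (v w) \<le> (cmod (v w))^2 + e^2" by (simp add: power2_diff mult.commute mult.left_commute)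
      then have "cmod (v w) \<le> (cmod (v w))^2 / (2*e) + e/2"
        using e by (simp add: field_simps power2_eq_square)
      then show ?case using elim by (simp add: norm_mult norm_power)
    qed
  qed
  also have "\<dots> = N2 v / (2*e) + e/2" unfolding N2_def using L2_int[OF v] by simp
  finally show ?thesis .
qed



theorem proj_exists:
  assumes u: "u \<in> L2"
  shows "\<exists>G\<in>H2. \<forall>k\<in>H2. inner2 (\<lambda>w. u w - G w) k = 0"
proof -
  define D where "D = (\<lambda>g. N2 (\<lambda>w. u w - g w)) ` H2"
  define d where "d = Inf D"
  have Dne: "D \<noteq> {}" unfolding D_def using H2_zero by auto
  have Dbdd: "bdd_below D" unfolding D_def by (rule bdd_belowI[of _ 0]) (auto simp: N2_nonneg)
  have dle: "d \<le> N2 (\<lambda>w. u w - g w)" if "g \<in> H2" for g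
    unfolding d_def using that Dbdd by (intro cInf_lower) (auto simp: D_def)
  have d0: "0 \<le> d" unfolding d_def using Dne by (intro cInf_greatest) (auto simp: D_def N2_nonneg)
  have "\<forall>n. \<exists>g\<in>H2. N2 (\<lambda>w. u w - g w) < d + 1 / (real n + 1)"
  proof
    fix n
    have "Inf D < d + 1 / (real n + 1)" unfolding d_def by simp
    then obtain x where "x \<in> D" "x < d + 1 / (real n + 1)" using cInf_lessD[OF Dne] by blast
    then show "\<exists>g\<in>H2. N2 (\<lambda>w. u w - g w) < d + 1 / (real n + 1)" unfolding D_def by auto
  qed
  then obtain gs where gsH: "\<And>n. gs n \<in> H2" and gsN: "\<And>n. N2 (\<lambda>w. u w - gs n w) < d + 1 / (real n + 1)"
    by metis
  have gsL: "gs n \<in> L2" for n using gsH H2_L2 by auto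
  have par: "N2 (\<lambda>w. gs m w - gs n w) \<le> 2 / (real n + 1) + 2 / (real m + 1)" for m n
  proof -
    define a where "a = (\<lambda>w. u w - gs n w)"
    define b where "b = (\<lambda>w. u w - gs m w)"
    have aL: "a \<in> L2" and bL: "b \<in> L2" unfolding a_def b_def using u gsL by (auto intro: L2_diff)
    have mid: "(\<lambda>w. (1/2) * (gs n w + gs m w)) \<in> H2" using gsH by (intro H2_cmult H2_add)
    have "complex_of_real (N2 (\<lambda>w. a w + b w) + N2 (\<lambda>w. a w - b w)) = complex_of_real (2 * N2 a + 2 * N2 b)"
      using aL bL L2_add[OF aL bL] L2_diff[OF aL bL]
      by (simp add: inner2_self[symmetric] inner2_add_left inner2_add_right inner2_diff_left inner2_diff_right)
    then have pl: "N2 (\<lambda>w. a w + b w) + N2 (\<lambda>w. a w - b w) = 2 * N2 a + 2 * N2 b"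
      by (simp only: of_real_eq_iff)
    have "(\<lambda>w. a w + b w) = (\<lambda>w. 2 * (u w - (1/2) * (gs n w + gs m w)))"
      unfolding a_def b_def by (auto simp: algebra_simps)
    then have "N2 (\<lambda>w. a w + b w) = 4 * N2 (\<lambda>w. u w - (1/2) * (gs n w + gs m w))"
      by (simp only: N2_cmult) simp
    also have "\<dots> \<ge> 4 * d" using dle[OF mid] by simp
    finally have ab: "N2 (\<lambda>w. a w + b w) \<ge> 4 * d" .
    have "(\<lambda>w. a w - b w) = (\<lambda>w. gs m w - gs n w)" unfolding a_def b_def by auto
    then have "N2 (\<lambda>w. gs m w - gs n w) = 2 * N2 a + 2 * N2 b - N2 (\<lambda>w. a w + b w)" using pl by simp
    also have "\<dots> \<le> 2 * (d + 1 / (real n + 1)) + 2 * (d + 1 / (real m + 1)) - 4 * d"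
      using gsN[of n] gsN[of m] ab unfolding a_def b_def by argo
    finally show ?thesis by simp
  qed
  have "\<exists>N. \<forall>m\<ge>N. \<forall>n\<ge>N. N2 (\<lambda>w. gs m w - gs n w) < e" if e: "e > 0" for e
  proof -
    obtain N :: nat where N: "4 / e < real N" using reals_Archimedean2 by blast
    have "4 / (real N + 1) < e" using N e by (simp add: field_simps)
    show ?thesis
    proof (intro exI allI impI)
      fix m n assume mn: "N \<le> m" "N \<le> n"
      have "2 / (real n + 1) \<le> 2 / (real N + 1)" "2 / (real m + 1) \<le> 2 / (real N + 1)"
        using mn by (auto intro!: divide_left_mono)
      then show "N2 (\<lambda>w. gs m w - gs n w) < e"
        using par[of m n] \<open>4 / (real N + 1) < e\<close> by linarith
    qed
  qed
  then obtain G where GL: "G \<in> L2" and Glim: "(\<lambda>n. N2 (\<lambda>w. gs n w - G w)) \<longlonglongrightarrow> 0"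
    using L2_complete[of gs] gsL by blast
  have [measurable]: "G \<in> borel_measurable borel" using GL by auto
  have GH: "G \<in> H2"
    unfolding H2_def
  proof (intro CollectI conjI allI impI GL)
    fix m :: nat assume "m \<ge> 1"
    have "cmod (integral\<^sup>L circ (\<lambda>w. G w * w ^ m)) \<le> e" if e: "e > 0" for e
    proof -
      have "eventually (\<lambda>n. N2 (\<lambda>w. gs n w - G w) < e^2) sequentially"
        using order_tendstoD(2)[OF Glim, of "e^2"] e by simp
      then obtain n where n: "N2 (\<lambda>w. gs n w - G w) < e^2" unfolding eventually_sequentially by blast
      have dL: "(\<lambda>w. gs n w - G w) \<in> L2" using gsL GL by (rule L2_diff)
      have "integral\<^sup>L circ (\<lambda>w. G w * w ^ m) = integral\<^sup>L circ (\<lambda>w. gs n w * w ^ m) - integral\<^sup>L circ (\<lambda>w. (gs n w - G w) * w ^ m)"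
        using int_pow_mult[OF gsL[of n]] int_pow_mult[OF dL]
        by (subst Bochner_Integration.integral_diff[symmetric]) (auto simp: algebra_simps)
      also have "integral\<^sup>L circ (\<lambda>w. gs n w * w ^ m) = 0" using H2_mom[OF gsH \<open>m \<ge> 1\<close>] .
      finally have "cmod (integral\<^sup>L circ (\<lambda>w. G w * w ^ m)) = cmod (integral\<^sup>L circ (\<lambda>w. (gs n w - G w) * w ^ m))"
        by simp
      also have "\<dots> \<le> N2 (\<lambda>w. gs n w - G w) / (2*e) + e/2" by (rule moment_small[OF dL e])
      also have "\<dots> \<le> e^2 / (2*e) + e/2" using n e by (intro add_right_mono divide_right_mono) auto
      also have "\<dots> = e" using e by (simp add: power2_eq_square field_simps)
      finally show ?thesis .
    qed
    then show "integral\<^sup>L circ (\<lambda>w. G w * w ^ m) = 0"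
      by (metis dense_le norm_le_zero_iff zero_less_norm_iff linorder_not_less order_refl)
  qed
  have vL: "(\<lambda>w. u w - G w) \<in> L2" using u GL by (rule L2_diff)
  have Gmin: "N2 (\<lambda>w. u w - G w) \<le> d"
  proof (rule field_le_epsilon)
    fix e :: real assume e: "e > 0"
    define t where "t = e / (3 * (d + 1))"
    have t: "t > 0" unfolding t_def using e d0 by simp
    have td: "t * d \<le> e / 3" unfolding t_def using e d0 by (simp add: field_simps)
    have ev1: "eventually (\<lambda>n. (1 + 1/t) * N2 (\<lambda>w. gs n w - G w) < e/3) sequentially"
    proof -
      have "(\<lambda>n. (1 + 1/t) * N2 (\<lambda>w. gs n w - G w)) \<longlonglongrightarrow> (1 + 1/t) * 0"
        by (intro tendsto_intros Glim)
      then show ?thesis using e by (intro order_tendstoD(2)) auto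
    qed
    have ev2: "eventually (\<lambda>n. (1 + t) * (1 / (real n + 1)) < e/3) sequentially"
    proof -
      have "(\<lambda>n. (1 + t) * (1 / (real n + 1))) \<longlonglongrightarrow> (1 + t) * 0"
      proof (intro tendsto_intros)
        show "(\<lambda>x. 1 / (real x + 1)) \<longlonglongrightarrow> 0"
          using LIMSEQ_inverse_real_of_nat by (simp add: inverse_eq_divide add.commute)
      qed
      then show ?thesis using e by (intro order_tendstoD(2)) auto
    qed
    obtain n where n1: "(1 + 1/t) * N2 (\<lambda>w. gs n w - G w) < e/3" and n2: "(1 + t) * (1 / (real n + 1)) < e/3"
      using eventually_conj[OF ev1 ev2] unfolding eventually_sequentially by blast
    have "N2 (\<lambda>w. u w - G w) = N2 (\<lambda>w. (u w - gs n w) + (gs n w - G w))" by simp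
    also have "\<dots> \<le> (1 + t) * N2 (\<lambda>w. u w - gs n w) + (1 + 1/t) * N2 (\<lambda>w. gs n w - G w)"
      using u gsL GL t by (intro N2_split L2_diff) auto
    also have "\<dots> \<le> (1 + t) * (d + 1 / (real n + 1)) + (1 + 1/t) * N2 (\<lambda>w. gs n w - G w)"
      using gsN[of n] t by (intro add_right_mono mult_left_mono) auto
    also have "\<dots> = d + t * d + (1 + t) * (1 / (real n + 1)) + (1 + 1/t) * N2 (\<lambda>w. gs n w - G w)"
      by (simp add: algebra_simps)
    also have "\<dots> \<le> d + e" using td n1 n2 by linarith
    finally show "N2 (\<lambda>w. u w - G w) \<le> d + e" .
  qed
  have "inner2 (\<lambda>w. u w - G w) k = 0" if kH: "k \<in> H2" for k
  proof -
    have kL: "k \<in> L2" using kH H2_L2 by auto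
    define a where "a = inner2 (\<lambda>w. u w - G w) k"
    define s where "s = 1 / (N2 k + 1)"
    have s: "s > 0" "s * N2 k < 1" unfolding s_def using N2_nonneg[of k] by (auto simp: field_simps)
    define c where "c = complex_of_real s * a"
    have "(\<lambda>w. G w + c * k w) \<in> H2" using GH kH by (intro H2_add H2_cmult)
    then have "d \<le> N2 (\<lambda>w. u w - (G w + c * k w))" by (rule dle)
    also have "(\<lambda>w. u w - (G w + c * k w)) = (\<lambda>w. (u w - G w) - c * k w)" by (auto simp: algebra_simps)
    also have "N2 \<dots> = N2 (\<lambda>w. u w - G w) - 2 * Re (cnj c * a) + (cmod c)^2 * N2 k"
      unfolding a_def by (rule N2_sub_scaled[OF vL kL])
    also have "Re (cnj c * a) = s * (cmod a)^2"
    proof -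
      have "cnj c * a = complex_of_real (s * (cmod a)^2)"
        unfolding c_def using complex_norm_square[of a]
        by (simp add: mult.commute mult.left_commute)
      then show ?thesis by simp
    qed
    also have "(cmod c)^2 = s^2 * (cmod a)^2"
      unfolding c_def using s by (simp add: norm_mult power_mult_distrib)
    finally have "d \<le> N2 (\<lambda>w. u w - G w) - 2 * (s * (cmod a)^2) + s^2 * (cmod a)^2 * N2 k" .
    then have "0 \<le> - 2 * (s * (cmod a)^2) + s * (cmod a)^2 * (s * N2 k)"
      using Gmin by (simp add: power2_eq_square algebra_simps)
    then have "0 \<le> s * (cmod a)^2 * (s * N2 k - 2)" by (simp add: algebra_simps)
    moreover have "s * N2 k - 2 < 0" using s by simp
    ultimately have "s * (cmod a)^2 \<le> 0"
      by (metis mult_le_0_iff not_le order.strict_iff_not zero_le_mult_iff)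
    then have "(cmod a)^2 \<le> 0" using s by (simp add: mult_le_0_iff)
    then show ?thesis unfolding a_def by simp
  qed
  with GH show ?thesis by blast
qed



lemma Pproj_spec:
  assumes "u \<in> L2"
  shows "Pproj u \<in> H2 \<and> (\<forall>k\<in>H2. inner2 (\<lambda>w. u w - Pproj u w) k = 0)"
proof -
  have "\<exists>g. g \<in> H2 \<and> (\<forall>k\<in>H2. inner2 (\<lambda>w. u w - g w) k = 0)" using proj_exists[OF assms] by blast
  then show ?thesis unfolding Pproj_def by (rule someI_ex)
qed

lemma P_H2: "u \<in> L2 \<Longrightarrow> Pproj u \<in> H2" using Pproj_spec by blast
lemma P_L2: "u \<in> L2 \<Longrightarrow> Pproj u \<in> L2" using P_H2 H2_L2 by blast
lemma P_orth: "u \<in> L2 \<Longrightarrow> k \<in> H2 \<Longrightarrow> inner2 (\<lambda>w. u w - Pproj u w) k = 0" using Pproj_spec by blast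

lemma inner_P: assumes "u \<in> L2" "k \<in> H2" shows "inner2 (Pproj u) k = inner2 u k"
proof -
  have "inner2 (\<lambda>w. u w - Pproj u w) k = inner2 u k - inner2 (Pproj u) k"
    by (rule inner2_diff_left[OF assms(1) P_L2[OF assms(1)] H2_L2[OF assms(2)]])
  then show ?thesis using P_orth[OF assms] by simp
qed

lemma inner_P_right: assumes "u \<in> L2" "k \<in> H2" shows "inner2 k (Pproj u) = inner2 k u"
  using inner_P[OF assms] by (metis inner2_cnj)

lemma P_unique:
  assumes u: "u \<in> L2" and g: "g \<in> H2" and orth: "\<forall>k\<in>H2. inner2 (\<lambda>w. u w - g w) k = 0"
  shows "AE w in circ. Pproj u w = g w"
proof -
  define d where "d = (\<lambda>w. Pproj u w - g w)"
  have dH: "d \<in> H2" unfolding d_def using P_H2[OF u] g by (rule H2_diff)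
  have gL: "g \<in> L2" using g by (rule H2_L2)
  have "d = (\<lambda>w. (u w - g w) - (u w - Pproj u w))" unfolding d_def by auto
  then have "inner2 d d = inner2 (\<lambda>w. u w - g w) d - inner2 (\<lambda>w. u w - Pproj u w) d"
    using u gL P_L2[OF u] by (simp add: inner2_diff_left L2_diff)
  also have "\<dots> = 0" using orth P_orth[OF u] dH by simp
  finally have "AE w in circ. d w = 0" using dH H2_L2 inner2_zero_AE by blast
  then show ?thesis unfolding d_def by auto
qed

lemma P_id: assumes "h \<in> H2" shows "AE w in circ. Pproj h w = h w"
  using assms by (intro P_unique H2_L2) (auto simp: inner2_def)

lemma P_cong:
  assumes u: "u \<in> L2" and v: "v \<in> L2" and e: "AE w in circ. u w = v w"
  shows "AE w in circ. Pproj u w = Pproj v w"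
proof (rule P_unique[OF u P_H2[OF v]], intro ballI)
  fix k assume k: "k \<in> H2"
  have [measurable]: "u \<in> borel_measurable borel" "v \<in> borel_measurable borel"
    "Pproj v \<in> borel_measurable borel" "k \<in> borel_measurable borel"
    using u v P_L2[OF v] H2_L2[OF k] by auto
  have "inner2 (\<lambda>w. u w - Pproj v w) k = inner2 (\<lambda>w. v w - Pproj v w) k"
    by (rule inner2_cong_left) (use e in auto)
  also have "\<dots> = 0" using P_orth[OF v k] .
  finally show "inner2 (\<lambda>w. u w - Pproj v w) k = 0" .
qed

lemma U_inner: assumes "a \<in> L2" "b \<in> L2" shows "inner2 (Uop a) b = inner2 a (Uop b)"
proof -
  have [measurable]: "a \<in> borel_measurable borel" "b \<in> borel_measurable borel" using assms by auto
  have "inner2 (Uop a) b = integral\<^sup>L circ (\<lambda>w. (\<lambda>w. cnj w * a (cnj w) * cnj (b w)) (cnj w))"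
    unfolding inner2_def Uop_def tildeop_def
    by (rule integral_cnj_circ[symmetric]) measurable
  also have "\<dots> = inner2 a (Uop b)"
    unfolding inner2_def Uop_def tildeop_def by (simp add: mult.commute mult.left_commute)
  finally show ?thesis .
qed

lemma adj_exists:
  assumes g: "g \<in> Linf" and x: "x \<in> H2"
  shows "adjH2 (Hank g) x \<in> H2 \<and> (\<forall>h\<in>H2. inner2 (Hank g h) x = inner2 h (adjH2 (Hank g) x))"
proof -
  have xL: "x \<in> L2" using x by (rule H2_L2)
  define y where "y = Pproj (\<lambda>w. cnj (g w) * Uop x w)"
  have vL: "(\<lambda>w. cnj (g w) * Uop x w) \<in> L2" using Linf_cnj[OF g] L2_U[OF xL] by (rule Linf_mult)
  have "y \<in> H2 \<and> (\<forall>h\<in>H2. inner2 (Hank g h) x = inner2 h y)"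
  proof (intro conjI ballI)
    show "y \<in> H2" unfolding y_def using vL by (rule P_H2)
    fix h assume h: "h \<in> H2"
    have hL: "h \<in> L2" using h by (rule H2_L2)
    have ghL: "(\<lambda>w. g w * h w) \<in> L2" using g hL by (rule Linf_mult)
    have "inner2 (Hank g h) x = inner2 (Uop (\<lambda>w. g w * h w)) x"
      unfolding Hank_def using L2_U[OF ghL] x by (rule inner_P)
    also have "\<dots> = inner2 (\<lambda>w. g w * h w) (Uop x)" using ghL xL by (rule U_inner)
    also have "\<dots> = inner2 h (\<lambda>w. cnj (g w) * Uop x w)"
      unfolding inner2_def by (simp add: mult.commute mult.left_commute)
    also have "\<dots> = inner2 h y" unfolding y_def using vL h by (rule inner_P_right[symmetric])
    finally show "inner2 (Hank g h) x = inner2 h y" .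
  qed
  then have "\<exists>y. y \<in> H2 \<and> (\<forall>h\<in>H2. inner2 (Hank g h) x = inner2 h y)" by blast
  then show ?thesis unfolding adjH2_def by (rule someI_ex)
qed



lemma aux_le: fixes x c d :: real assumes "x \<le> 1" "0 \<le> c" "0 \<le> d" shows "d * (c * x) \<le> d * c"
  using assms by (intro mult_left_mono) (auto intro: mult_left_le)

lemma geom_int:
  fixes k e :: "complex \<Rightarrow> complex" and a :: complex
  assumes k: "integrable circ k" and [measurable]: "e \<in> borel_measurable borel"
    and eb: "AE w in circ. cmod (e w) \<le> 1" and a: "cmod a < 1"
  shows "(\<lambda>j. a^j * integral\<^sup>L circ (\<lambda>w. k w * e w ^ j)) sums integral\<^sup>L circ (\<lambda>w. k w / (1 - a * e w))"
proof -
  have [measurable]: "k \<in> borel_measurable borel" using borel_measurable_integrable[OF k] by simp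
  define f where "f j w = a^j * (k w * e w ^ j)" for j w
  have [measurable]: "f j \<in> borel_measurable circ" for j unfolding f_def by measurable
  have ebj: "AE w in circ. cmod (e w ^ j) \<le> 1" for j
    using eb by eventually_elim (simp add: norm_power power_le_one)
  have int: "integrable circ (f j)" for j
    unfolding f_def using integrable_bdd_mult[OF k _ ebj[of j]] by simp
  have sn: "AE w in circ. summable (\<lambda>j. norm (f j w))"
    using eb
  proof eventually_elim
    case (elim w)
    show ?case
    proof (rule summable_comparison_test[where g="\<lambda>j. (cmod a)^j * cmod (k w)"])
      have "norm (norm (f n w)) \<le> (cmod a)^n * cmod (k w)" for n
      proof -
        have "cmod (e w) ^ n \<le> 1" using elim by (simp add: power_le_one)
        then have "cmod (k w) * cmod (e w) ^ n \<le> cmod (k w)"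
          using mult_left_mono[of "cmod (e w) ^ n" 1 "cmod (k w)"] by simp
        then show ?thesis by (simp add: f_def norm_mult norm_power mult_left_mono)
      qed
      then show "\<exists>N. \<forall>n\<ge>N. norm (norm (f n w)) \<le> (cmod a)^n * cmod (k w)" by blast
      show "summable (\<lambda>j. (cmod a)^j * cmod (k w))"
        using a by (intro summable_mult2 summable_geometric) simp
    qed
  qed
  have si: "summable (\<lambda>j. integral\<^sup>L circ (\<lambda>w. norm (f j w)))"
  proof (rule summable_comparison_test[where g="\<lambda>j. (cmod a)^j * integral\<^sup>L circ (\<lambda>w. cmod (k w))"])
    show "\<exists>N. \<forall>n\<ge>N. norm (integral\<^sup>L circ (\<lambda>w. norm (f n w))) \<le> (cmod a)^n * integral\<^sup>L circ (\<lambda>w. cmod (k w))"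
    proof (intro exI allI impI)
      fix n :: nat
      have "integral\<^sup>L circ (\<lambda>w. norm (f n w)) \<le> integral\<^sup>L circ (\<lambda>w. (cmod a)^n * cmod (k w))"
      proof (rule integral_mono_AE)
        show "integrable circ (\<lambda>w. norm (f n w))" using int by simp
        show "integrable circ (\<lambda>w. (cmod a)^n * cmod (k w))" using k by simp
        show "AE w in circ. norm (f n w) \<le> (cmod a)^n * cmod (k w)"
          using ebj[of n] by eventually_elim
             (auto simp: f_def norm_mult norm_power intro!: aux_le)
      qed
      then show "norm (integral\<^sup>L circ (\<lambda>w. norm (f n w))) \<le> (cmod a)^n * integral\<^sup>L circ (\<lambda>w. cmod (k w))"
        by simp
    qed
    show "summable (\<lambda>j. (cmod a)^j * integral\<^sup>L circ (\<lambda>w. cmod (k w)))"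
      using a by (intro summable_mult2 summable_geometric) simp
  qed
  have "(\<lambda>j. integral\<^sup>L circ (f j)) sums integral\<^sup>L circ (\<lambda>w. \<Sum>j. f j w)"
    by (rule sums_integral[OF int sn si])
  moreover have "integral\<^sup>L circ (f j) = a^j * integral\<^sup>L circ (\<lambda>w. k w * e w ^ j)" for j
    unfolding f_def by simp
  moreover have "integral\<^sup>L circ (\<lambda>w. \<Sum>j. f j w) = integral\<^sup>L circ (\<lambda>w. k w / (1 - a * e w))"
  proof (rule integral_cong_AE)
    show "(\<lambda>w. \<Sum>j. f j w) \<in> borel_measurable circ" by measurable
    show "(\<lambda>w. k w / (1 - a * e w)) \<in> borel_measurable circ" by measurable
    show "AE w in circ. (\<Sum>j. f j w) = k w / (1 - a * e w)"
      using eb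
    proof eventually_elim
      case (elim w)
      have "cmod a * cmod (e w) \<le> cmod a" using mult_left_le[of "cmod (e w)" "cmod a"] elim by simp
      then have "norm (a * e w) < 1" using a by (simp add: norm_mult)
      then have "(\<lambda>j. (a * e w)^j) sums (1 / (1 - a * e w))" by (rule geometric_sums)
      then have "(\<lambda>j. k w * (a * e w)^j) sums (k w * (1 / (1 - a * e w)))" by (rule sums_mult)
      then have "(\<lambda>j. f j w) sums (k w / (1 - a * e w))"
        unfolding f_def by (simp add: power_mult_distrib algebra_simps)
      then show ?case by (rule sums_unique[symmetric])
    qed
  qed
  ultimately show ?thesis by simp
qed



lemma circ_pow_cnj:
  assumes "cmod w = 1"
  shows "w^n * cnj w^m = (if m \<le> n then w^(n-m) else cnj w^(m-n))"
proof -
  have wc: "w * cnj w = 1" using complex_norm_square[of w] assms by simp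
  show ?thesis
  proof (cases "m \<le> n")
    case True
    then have "w^n = w^(n-m) * w^m" by (simp add: power_add[symmetric])
    then have "w^n * cnj w^m = w^(n-m) * (w * cnj w)^m" by (simp add: power_mult_distrib)
    then show ?thesis using True wc by simp
  next
    case False
    then have "cnj w^m = cnj w^(m-n) * cnj w^n" by (simp add: power_add[symmetric])
    then have "w^n * cnj w^m = cnj w^(m-n) * (w * cnj w)^n" by (simp add: power_mult_distrib)
    then show ?thesis using False wc by simp
  qed
qed

lemma mom_mix:
  assumes p: "p \<in> L2"
  shows "integral\<^sup>L circ (\<lambda>w. p w * (w^n * cnj w^m)) =
    (if m \<le> n then integral\<^sup>L circ (\<lambda>w. p w * w^(n-m)) else integral\<^sup>L circ (\<lambda>w. p w * cnj w^(m-n)))"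
proof -
  have [measurable]: "p \<in> borel_measurable borel" using p by auto
  have "integral\<^sup>L circ (\<lambda>w. p w * (w^n * cnj w^m)) =
    integral\<^sup>L circ (\<lambda>w. if m \<le> n then p w * w^(n-m) else p w * cnj w^(m-n))"
    by (rule integral_cong_AE) (use AE_circle in \<open>auto simp: circ_pow_cnj\<close>)
  then show ?thesis by (cases "m \<le> n") auto
qed

lemma int_cnjpow: "integral\<^sup>L circ (\<lambda>w. cnj w ^ n) = (if n = 0 then 1 else 0)"
proof -
  have "integral\<^sup>L circ (\<lambda>w. cnj (w ^ n)) = cnj (integral\<^sup>L circ (\<lambda>w. w ^ n))"
    by (rule Bochner_Integration.integral_cnj)
  then show ?thesis by (simp add: int_pow)
qed

lemma H2_one: "(\<lambda>w. 1) \<in> H2"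
  unfolding H2_def by (auto intro!: L2_bounded[of _ 1] simp: int_pow)

lemma AE_circ_id: "AE w in circ. cmod w \<le> 1" using AE_circle by auto
lemma AE_circ_cnj: "AE w in circ. cmod (cnj w) \<le> 1" using AE_circle by auto

lemma H2_shift: assumes k: "k \<in> H2" shows "(\<lambda>w. w * k w) \<in> H2"
proof -
  have kL: "k \<in> L2" using k by (rule H2_L2)
  have "(\<lambda>w. w * k w) \<in> L2" by (rule L2_bdd_mult[OF _ AE_circ_id kL]) simp
  moreover have "integral\<^sup>L circ (\<lambda>w. w * k w * w ^ n) = 0" if "n \<ge> 1" for n
  proof -
    have "integral\<^sup>L circ (\<lambda>w. w * k w * w ^ n) = integral\<^sup>L circ (\<lambda>w. k w * w ^ (Suc n))"
      by (rule Bochner_Integration.integral_cong) (simp_all add: mult.commute mult.left_commute)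
    also have "\<dots> = 0" by (rule H2_mom[OF k]) simp
    finally show ?thesis .
  qed
  ultimately show ?thesis unfolding H2_def by auto
qed

lemma geom_bound:
  assumes a: "cmod a < 1" and e: "cmod e \<le> 1"
  shows "cmod (1 / (1 - a * e)) \<le> 1 / (1 - cmod a)"
proof -
  have "cmod (a * e) \<le> cmod a" using e mult_left_le[of "cmod e" "cmod a"] by (simp add: norm_mult)
  moreover have "1 - cmod (a * e) \<le> cmod (1 - a * e)"
    using norm_triangle_ineq2[of 1 "a * e"] by simp
  ultimately have "1 - cmod a \<le> cmod (1 - a * e)" by linarith
  then show ?thesis using a by (simp add: norm_divide divide_simps)
qed

lemma AE_geom_bound:
  assumes a: "cmod a < 1" and eb: "AE w in circ. cmod (e w) \<le> 1"
  shows "AE w in circ. cmod (1 / (1 - a * e w)) \<le> 1 / (1 - cmod a)"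
  using eb by eventually_elim (rule geom_bound[OF a])

lemma H2_geom:
  assumes k: "k \<in> H2" and a: "cmod a < 1"
  shows "(\<lambda>w. k w / (1 - a * w)) \<in> H2"
proof -
  have kL: "k \<in> L2" using k by (rule H2_L2)
  have "(\<lambda>w. 1 / (1 - a * w) * k w) \<in> L2"
    by (rule L2_bdd_mult[OF _ AE_geom_bound[OF a AE_circ_id] kL]) simp
  then have L: "(\<lambda>w. k w / (1 - a * w)) \<in> L2" by simp
  moreover have "integral\<^sup>L circ (\<lambda>w. k w / (1 - a * w) * w ^ n) = 0" if n: "n \<ge> 1" for n
  proof -
    have "(\<lambda>j. a^j * integral\<^sup>L circ (\<lambda>w. (k w * w^n) * w ^ j)) sums integral\<^sup>L circ (\<lambda>w. (k w * w^n) / (1 - a * w))"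
      by (rule geom_int[OF int_pow_mult[OF kL] _ AE_circ_id a]) simp
    moreover have "integral\<^sup>L circ (\<lambda>w. (k w * w^n) * w ^ j) = 0" for j
    proof -
      have "integral\<^sup>L circ (\<lambda>w. (k w * w^n) * w ^ j) = integral\<^sup>L circ (\<lambda>w. k w * w^(n+j))"
        by (simp add: power_add mult.assoc)
      also have "\<dots> = 0" using H2_mom[OF k] n by simp
      finally show ?thesis .
    qed
    ultimately have "integral\<^sup>L circ (\<lambda>w. (k w * w^n) / (1 - a * w)) = 0"
      by (simp add: sums_iff)
    then show ?thesis by (simp add: mult.commute mult.left_commute)
  qed
  ultimately show ?thesis unfolding H2_def by auto
qed



definition Ez :: "complex \<Rightarrow> complex \<Rightarrow> complex" where
  "Ez z w = cnj w / (1 - z * cnj w)"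

lemma Ez_meas[measurable]: "Ez z \<in> borel_measurable borel"
  unfolding Ez_def by measurable

lemma E_bound: assumes "cmod z < 1" shows "AE w in circ. cmod (Ez z w) \<le> 1 / (1 - cmod z)"
  using AE_geom_bound[OF assms AE_circ_cnj] AE_circle
proof eventually_elim
  case (elim w)
  then show ?case by (simp add: Ez_def norm_divide)
qed

lemma E_L2: "cmod z < 1 \<Longrightarrow> Ez z \<in> L2"
  by (rule L2_bounded[OF _ E_bound]) auto

lemma L2_one: "(\<lambda>w. 1) \<in> L2" using H2_one H2_L2 by blast

lemma E_orth: assumes k: "k \<in> H2" and z: "cmod z < 1" shows "inner2 k (Ez z) = 0"
proof -
  have kL: "k \<in> L2" using k by (rule H2_L2)
  have cz: "cmod (cnj z) < 1" using z by simp
  have "inner2 k (Ez z) = integral\<^sup>L circ (\<lambda>w. (k w * w) / (1 - cnj z * w))"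
    unfolding inner2_def Ez_def by (simp add: mult.commute mult.left_commute)
  also have "\<dots> = 0"
  proof -
    have "(\<lambda>j. cnj z^j * integral\<^sup>L circ (\<lambda>w. (k w * w) * w ^ j)) sums integral\<^sup>L circ (\<lambda>w. (k w * w) / (1 - cnj z * w))"
      by (rule geom_int[OF int_pow_mult[OF kL, of 1, simplified] _ AE_circ_id cz]) simp
    moreover have "integral\<^sup>L circ (\<lambda>w. (k w * w) * w ^ j) = 0" for j
    proof -
      have "integral\<^sup>L circ (\<lambda>w. (k w * w) * w ^ j) = integral\<^sup>L circ (\<lambda>w. k w * w ^ Suc j)"
        by (rule Bochner_Integration.integral_cong) (simp_all add: mult.commute mult.left_commute)
      also have "\<dots> = 0" by (rule H2_mom[OF k]) simp
      finally show ?thesis .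
    qed
    ultimately show ?thesis by (simp add: sums_iff)
  qed
  finally show ?thesis .
qed

lemma E_pow_int:
  assumes z: "cmod z < 1" and n: "n \<ge> 1"
  shows "integral\<^sup>L circ (\<lambda>w. Ez z w * w^n) = z^(n-1)"
proof -
  have L: "(\<lambda>w. w^n * cnj w) \<in> L2"
    by (rule L2_bounded[of _ 1]) (use AE_circle in \<open>auto simp: norm_mult norm_power\<close>)
  have "(\<lambda>j. z^j * integral\<^sup>L circ (\<lambda>w. (w^n * cnj w) * cnj w ^ j)) sums integral\<^sup>L circ (\<lambda>w. (w^n * cnj w) / (1 - z * cnj w))"
    by (rule geom_int[OF L2_integrable[OF L] _ AE_circ_cnj z]) simp
  moreover have "integral\<^sup>L circ (\<lambda>w. (w^n * cnj w) * cnj w ^ j) = (if j = n - 1 then 1 else 0)" for j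
  proof -
    have "integral\<^sup>L circ (\<lambda>w. (w^n * cnj w) * cnj w ^ j) = integral\<^sup>L circ (\<lambda>w. 1 * (w^n * cnj w ^ Suc j))"
      by (rule Bochner_Integration.integral_cong) (simp_all add: mult.commute mult.left_commute)
    also have "\<dots> = (if j = n - 1 then 1 else 0)"
      using n by (subst mom_mix[OF L2_one]) (auto simp: int_pow int_cnjpow)
    finally show ?thesis .
  qed
  ultimately have "(\<lambda>j. if j = n - 1 then z^j else 0) sums integral\<^sup>L circ (\<lambda>w. (w^n * cnj w) / (1 - z * cnj w))"
    by (simp add: if_distrib cong: if_cong)
  moreover have "(\<lambda>j. if j = n - 1 then z^j else 0) sums z^(n-1)" by (rule sums_single)
  ultimately have "integral\<^sup>L circ (\<lambda>w. (w^n * cnj w) / (1 - z * cnj w)) = z^(n-1)" using sums_unique2 by blast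
  then show ?thesis unfolding Ez_def by (simp add: mult.commute mult.left_commute)
qed



lemma E_p_int:
  assumes p: "p \<in> H2" and z: "cmod z < 1" and n: "n \<ge> 1"
  shows "integral\<^sup>L circ (\<lambda>w. Ez z w * p w * w^n) = z^(n-1) * integral\<^sup>L circ (\<lambda>w. p w / (1 - z * cnj w))"
proof -
  have pL: "p \<in> L2" using p by (rule H2_L2)
  have [measurable]: "p \<in> borel_measurable borel" using pL by auto
  define t where "t j = z^j * integral\<^sup>L circ (\<lambda>w. (p w * w^n * cnj w) * cnj w ^ j)" for j
  have L: "(\<lambda>w. (w^n * cnj w) * p w) \<in> L2"
    by (rule L2_bdd_mult[OF _ _ pL, of _ 1]) (use AE_circle in \<open>auto simp: norm_mult norm_power\<close>)
  have "t sums integral\<^sup>L circ (\<lambda>w. (p w * w^n * cnj w) / (1 - z * cnj w))"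
    unfolding t_def using L2_integrable[OF L]
    by (intro geom_int[OF _ _ AE_circ_cnj z]) (auto simp: mult.commute mult.left_commute)
  moreover have "t sums (z^(n-1) * integral\<^sup>L circ (\<lambda>w. p w / (1 - z * cnj w)))"
  proof -
    have tj: "t j = z^j * (if Suc j \<le> n then integral\<^sup>L circ (\<lambda>w. p w * w^(n - Suc j))
                 else integral\<^sup>L circ (\<lambda>w. p w * cnj w^(Suc j - n)))" for j
    proof -
      have "integral\<^sup>L circ (\<lambda>w. (p w * w^n * cnj w) * cnj w ^ j) = integral\<^sup>L circ (\<lambda>w. p w * (w^n * cnj w ^ Suc j))"
        by (rule Bochner_Integration.integral_cong) (simp_all add: mult.commute mult.left_commute)
      note e = this
      show ?thesis unfolding t_def e mom_mix[OF pL] by (rule refl)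
    qed
    have t0: "t j = 0" if "j < n - 1" for j
    proof -
      have "Suc j \<le> n" "n - Suc j \<ge> 1" using that by auto
      then show ?thesis using tj[of j] H2_mom[OF p, of "n - Suc j"] by simp
    qed
    have tsh: "t (i + (n - 1)) = z^(n-1) * (z^i * integral\<^sup>L circ (\<lambda>w. p w * cnj w ^ i))" for i
    proof (cases "i = 0")
      case True
      then show ?thesis using tj[of "n-1"] n by simp
    next
      case False
      then have "\<not> Suc (i + (n - 1)) \<le> n" "Suc (i + (n - 1)) - n = i" using n by auto
      moreover have "z ^ (i + (n - 1)) = z^i * z^(n-1)" by (rule power_add)
      ultimately show ?thesis using tj[of "i + (n-1)"] by (simp only: if_False) (simp add: mult.commute mult.left_commute)
    qed
    have "(\<lambda>i. z^i * integral\<^sup>L circ (\<lambda>w. p w * cnj w ^ i)) sums integral\<^sup>L circ (\<lambda>w. p w / (1 - z * cnj w))"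
      by (rule geom_int[OF L2_integrable[OF pL] _ AE_circ_cnj z]) simp
    then have "(\<lambda>i. t (i + (n - 1))) sums (z^(n-1) * integral\<^sup>L circ (\<lambda>w. p w / (1 - z * cnj w)))"
      unfolding tsh by (rule sums_mult)
    then show ?thesis by (subst (asm) sums_zero_iff_shift) (auto intro: t0)
  qed
  ultimately have "integral\<^sup>L circ (\<lambda>w. (p w * w^n * cnj w) / (1 - z * cnj w)) = z^(n-1) * integral\<^sup>L circ (\<lambda>w. p w / (1 - z * cnj w))"
    using sums_unique2 by blast
  then show ?thesis unfolding Ez_def by (simp add: mult.commute mult.left_commute)
qed

lemma H2_Ep:
  assumes p: "p \<in> H2" and z: "cmod z < 1"
  defines "m \<equiv> integral\<^sup>L circ (\<lambda>w. p w / (1 - z * cnj w))"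
  shows "(\<lambda>w. Ez z w * p w - m * Ez z w) \<in> H2"
proof -
  have pL: "p \<in> L2" using p by (rule H2_L2)
  have EpL: "(\<lambda>w. Ez z w * p w) \<in> L2" by (rule L2_bdd_mult[OF _ E_bound[OF z] pL]) simp
  have mEL: "(\<lambda>w. m * Ez z w) \<in> L2" by (rule L2_cmult[OF E_L2[OF z]])
  have "integral\<^sup>L circ (\<lambda>w. (Ez z w * p w - m * Ez z w) * w^n) = 0" if n: "n \<ge> 1" for n
  proof -
    have "integral\<^sup>L circ (\<lambda>w. (Ez z w * p w - m * Ez z w) * w^n)
        = integral\<^sup>L circ (\<lambda>w. Ez z w * p w * w^n) - integral\<^sup>L circ (\<lambda>w. m * (Ez z w * w^n))"
      using int_pow_mult[OF EpL, of n] int_pow_mult[OF mEL, of n]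
      by (subst Bochner_Integration.integral_diff[symmetric]) (auto simp: algebra_simps)
    also have "\<dots> = z^(n-1) * m - m * z^(n-1)"
      using E_p_int[OF p z n] E_pow_int[OF z n] unfolding m_def by simp
    finally show ?thesis by simp
  qed
  moreover have "(\<lambda>w. Ez z w * p w - m * Ez z w) \<in> L2" using EpL mEL by (rule L2_diff)
  ultimately show ?thesis unfolding H2_def by auto
qed



lemma phiz_meas[measurable]: "phiz z \<in> borel_measurable borel"
  unfolding phiz_def by measurable
lemma kz_meas[measurable]: "kz z \<in> borel_measurable borel"
  unfolding kz_def by measurable
lemma tilde_meas[measurable]: assumes [measurable]: "h \<in> borel_measurable borel" shows "tildeop h \<in> borel_measurable borel"
  unfolding tildeop_def by measurable
lemma Uop_meas[measurable]: assumes [measurable]: "h \<in> borel_measurable borel" shows "Uop h \<in> borel_measurable borel"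
  unfolding Uop_def by measurable

lemma phiz_eq: "phiz z w = z * (1 / (1 - cnj z * w)) - w * (1 / (1 - cnj z * w))"
  unfolding phiz_def by (simp add: diff_divide_distrib)

lemma phiz_bound: assumes z: "cmod z < 1" shows "AE w in circ. cmod (phiz z w) \<le> 2 / (1 - cmod z)"
proof -
  have cz: "cmod (cnj z) < 1" using z by simp
  show ?thesis
  using AE_geom_bound[OF cz AE_circ_id] AE_circle
proof eventually_elim
  case (elim w)
  have "cmod (z - w) \<le> 2" using norm_triangle_ineq4[of z w] z elim by simp
  moreover have "phiz z w = (z - w) * (1 / (1 - cnj z * w))" unfolding phiz_def by simp
  ultimately have "cmod (phiz z w) \<le> 2 * (1 / (1 - cmod z))"
    using elim by (simp only: norm_mult complex_mod_cnj) (intro mult_mono, auto)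
  then show ?case by simp
qed
qed

lemma H2_phi_mult: assumes k: "k \<in> H2" and z: "cmod z < 1"
  shows "(\<lambda>w. phiz z w * k w) \<in> H2"
proof -
  have cz: "cmod (cnj z) < 1" using z by simp
  have "(\<lambda>w. z * (k w / (1 - cnj z * w)) - (w * k w) / (1 - cnj z * w)) \<in> H2"
    by (intro H2_diff H2_cmult H2_geom[OF _ cz] H2_shift k)
  moreover have "(\<lambda>w. z * (k w / (1 - cnj z * w)) - (w * k w) / (1 - cnj z * w)) = (\<lambda>w. phiz z w * k w)"
    unfolding phiz_def by (auto simp: fun_eq_iff diff_divide_distrib algebra_simps)
  ultimately show ?thesis by simp
qed

lemma phistar_eq: "cnj (tildeop (phiz z) w) = (cnj z - w) / (1 - z * w)"
  unfolding tildeop_def phiz_def by simp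

lemma H2_phistar_mult: assumes k: "k \<in> H2" and z: "cmod z < 1"
  shows "(\<lambda>w. cnj (tildeop (phiz z) w) * k w) \<in> H2"
proof -
  have "(\<lambda>w. cnj z * (k w / (1 - z * w)) - (w * k w) / (1 - z * w)) \<in> H2"
    by (intro H2_diff H2_cmult H2_geom[OF _ z] H2_shift k)
  moreover have "(\<lambda>w. cnj z * (k w / (1 - z * w)) - (w * k w) / (1 - z * w)) = (\<lambda>w. cnj (tildeop (phiz z) w) * k w)"
    unfolding phistar_eq by (auto simp: fun_eq_iff diff_divide_distrib algebra_simps)
  ultimately show ?thesis by simp
qed

lemma kz_H2: assumes z: "cmod z < 1" shows "kz z \<in> H2"
proof -
  have cz: "cmod (cnj z) < 1" using z by simp
  have "(\<lambda>w. complex_of_real (sqrt (1 - (cmod z)^2)) * (1 / (1 - cnj z * w))) \<in> H2"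
    by (intro H2_cmult H2_geom[OF H2_one cz])
  then show ?thesis unfolding kz_def by simp
qed

lemma U_kzbar: "Uop (kz (cnj z)) = (\<lambda>w. complex_of_real (sqrt (1 - (cmod z)^2)) * Ez z w)"
  unfolding Uop_def tildeop_def kz_def Ez_def by (simp add: fun_eq_iff)

lemma cnj_kz: "cnj (kz z w) = complex_of_real (sqrt (1 - (cmod z)^2)) / (1 - z * cnj w)"
  unfolding kz_def by simp

lemma cnj_phi_AE: assumes z: "cmod z < 1"
  shows "AE w in circ. cnj (phiz z w) = cnj z - complex_of_real (1 - (cmod z)^2) * Ez z w"
  using AE_circle
proof eventually_elim
  case (elim w)
  have "cmod (z * cnj w) < 1" using z elim by (simp add: norm_mult)
  then have nz: "1 - z * cnj w \<noteq> 0" by auto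
  have "complex_of_real (1 - (cmod z)^2) = 1 - z * cnj z"
    using complex_norm_square[of z] by simp
  then show ?case using nz unfolding phiz_def Ez_def
    by (simp add: field_simps)
qed

lemma U_phistar: "Uop (\<lambda>w. cnj (tildeop (phiz z) w) * k w) = (\<lambda>w. cnj (phiz z w) * Uop k w)"
  unfolding Uop_def tildeop_def by (simp add: fun_eq_iff mult.commute mult.left_commute)



theorem lemma5p2:
  fixes f g :: "complex \<Rightarrow> complex" and z :: complex
  assumes "f \<in> Linf" and "g \<in> Linf" and "cmod z < 1"
  defines "K \<equiv> (\<lambda>h. Hank f (Toep g h))"
  shows "\<forall>h\<in>H2. AE w in circ.
           K (Toep (phiz z) h) w =
           Toep (tildeop (phiz z)) (K h) w
             - rank1 (Hank f (kz z)) (adjH2 (Hank g) (kz (cnj z))) h w"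
proof
  fix h assume h: "h \<in> H2"
  note fL = assms(1) and gL = assms(2) and z = assms(3)
  have cz: "cmod (cnj z) < 1" using z by simp
  have hL: "h \<in> L2" using h by (rule H2_L2)
  have [measurable]: "f \<in> borel_measurable borel" "g \<in> borel_measurable borel" using fL gL by auto
  define \<phi> where "\<phi> = phiz z"
  define s where "s = complex_of_real (sqrt (1 - (cmod z)^2))"
  define c where "c = complex_of_real (1 - (cmod z)^2)"
  have ss: "s * s = c"
  proof -
    have "0 \<le> 1 - (cmod z)^2" using z by (simp add: abs_square_le_1 less_imp_le)
    then show ?thesis unfolding s_def c_def by (simp flip: of_real_mult)
  qed
  have cs: "cnj s = s" "cnj c = c" unfolding s_def c_def by simp_all
  have phim[measurable]: "\<phi> \<in> borel_measurable borel" unfolding \<phi>_def by simp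
  have phiB: "AE w in circ. cmod (\<phi> w) \<le> 2 / (1 - cmod z)" unfolding \<phi>_def by (rule phiz_bound[OF z])
  define t\<phi> where "t\<phi> = tildeop \<phi>"
  have tphim[measurable]: "t\<phi> \<in> borel_measurable borel" unfolding t\<phi>_def by simp
  have tphiB: "AE w in circ. cmod (t\<phi> w) \<le> 2 / (1 - cmod z)"
    unfolding t\<phi>_def tildeop_def by (subst AE_cnj_circ) (auto intro: phiB)
  define gh where "gh = (\<lambda>w. g w * h w)"
  have ghL: "gh \<in> L2" unfolding gh_def using gL hL by (rule Linf_mult)
  define Pgh where "Pgh = Pproj gh"
  have PghH: "Pgh \<in> H2" unfolding Pgh_def using ghL by (rule P_H2)
  have PghL: "Pgh \<in> L2" using PghH by (rule H2_L2)
  have fPghL: "(\<lambda>w. f w * Pgh w) \<in> L2" using fL PghL by (rule Linf_mult)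
  define V where "V = Pproj (Uop (\<lambda>w. f w * Pgh w))"
  have VH: "V \<in> H2" unfolding V_def using L2_U[OF fPghL] by (rule P_H2)
  have VL: "V \<in> L2" using VH by (rule H2_L2)
  have phL: "(\<lambda>w. \<phi> w * h w) \<in> H2" unfolding \<phi>_def using h z by (rule H2_phi_mult)
  define Q where "Q = Pproj (\<lambda>w. \<phi> w * h w)"
  have QH: "Q \<in> H2" unfolding Q_def using H2_L2[OF phL] by (rule P_H2)
  have QL: "Q \<in> L2" using QH by (rule H2_L2)
  have gQL: "(\<lambda>w. g w * Q w) \<in> L2" using gL QL by (rule Linf_mult)
  define W where "W = Pproj (\<lambda>w. g w * Q w)"
  have WH: "W \<in> H2" unfolding W_def using gQL by (rule P_H2)
  have WL: "W \<in> L2" using WH by (rule H2_L2)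
  have fWL: "(\<lambda>w. f w * W w) \<in> L2" using fL WL by (rule Linf_mult)
  define X where "X = Uop (\<lambda>w. f w * W w)"
  have XL: "X \<in> L2" unfolding X_def using fWL by (rule L2_U)
  define A where "A = adjH2 (Hank g) (kz (cnj z))"
  have kzbH: "kz (cnj z) \<in> H2" using cz by (rule kz_H2)
  have kzbL: "kz (cnj z) \<in> L2" using kzbH by (rule H2_L2)
  have AH: "A \<in> H2" and Aadj: "\<And>h. h \<in> H2 \<Longrightarrow> inner2 (Hank g h) (kz (cnj z)) = inner2 h A"
    unfolding A_def using adj_exists[OF gL kzbH] by auto
  have AL: "A \<in> L2" using AH by (rule H2_L2)
  have kzH: "kz z \<in> H2" using z by (rule kz_H2)
  have kzL: "kz z \<in> L2" using kzH by (rule H2_L2)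
  have fkzL: "(\<lambda>w. f w * kz z w) \<in> L2" using fL kzL by (rule Linf_mult)
  define HK where "HK = Pproj (Uop (\<lambda>w. f w * kz z w))"
  have HKH: "HK \<in> H2" unfolding HK_def using L2_U[OF fkzL] by (rule P_H2)
  have HKL: "HK \<in> L2" using HKH by (rule H2_L2)
  have tVL: "(\<lambda>w. t\<phi> w * V w) \<in> L2" by (rule L2_bdd_mult[OF tphim tphiB VL])
  define R where "R = (\<lambda>w. Pproj (\<lambda>w. t\<phi> w * V w) w - inner2 h A * HK w)"
  have RH: "R \<in> H2" unfolding R_def
    by (intro H2_diff H2_cmult P_H2 tVL HKH)
  have RL: "R \<in> L2" using RH by (rule H2_L2)
  have lhs: "K (Toep (phiz z) h) = Pproj X"
    unfolding K_def Hank_def Toep_def X_def W_def Q_def \<phi>_def ..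
  have rhs: "(\<lambda>w. Toep (tildeop (phiz z)) (K h) w
             - rank1 (Hank f (kz z)) (adjH2 (Hank g) (kz (cnj z))) h w) = R"
    unfolding R_def K_def Hank_def Toep_def rank1_def t\<phi>_def V_def Pgh_def gh_def HK_def A_def \<phi>_def ..
  have orth: "\<forall>k\<in>H2. inner2 (\<lambda>w. X w - R w) k = 0"
  proof
    fix k assume k: "k \<in> H2"
    have kL: "k \<in> L2" using k by (rule H2_L2)
    have [measurable]: "k \<in> borel_measurable borel" using kL by auto
    define B where "B = (\<lambda>w. cnj (f w) * Uop k w)"
    have BL: "B \<in> L2" unfolding B_def using Linf_cnj[OF fL] L2_U[OF kL] by (rule Linf_mult)
    define p where "p = Pproj B"
    have pH: "p \<in> H2" unfolding p_def using BL by (rule P_H2)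
    have pL: "p \<in> L2" using pH by (rule H2_L2)
    have [measurable]: "p \<in> borel_measurable borel" using pL by auto
    define m where "m = integral\<^sup>L circ (\<lambda>w. p w / (1 - z * cnj w))"
    define E where "E = Ez z"
    define r where "r = (\<lambda>w. E w * p w - m * E w)"
    have rH: "r \<in> H2" unfolding r_def E_def m_def using pH z by (rule H2_Ep)
    have rL: "r \<in> L2" using rH by (rule H2_L2)
    have EL: "E \<in> L2" unfolding E_def using z by (rule E_L2)
    have [measurable]: "E \<in> borel_measurable borel" "r \<in> borel_measurable borel" using EL rL by auto
    have mEL: "(\<lambda>w. m * E w) \<in> L2" using EL by (rule L2_cmult)
    have rmEL: "(\<lambda>w. r w + m * E w) \<in> L2" using rL mEL by (rule L2_add)
    have cpp: "AE w in circ. cnj (\<phi> w) * p w = cnj z * p w - c * (r w + m * E w)"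
      using cnj_phi_AE[OF z]
    proof eventually_elim
      case (elim w)
      have e1: "cnj (\<phi> w) = cnj z - c * E w" using elim unfolding \<phi>_def c_def E_def .
      have e2: "r w + m * E w = E w * p w" unfolding r_def by simp
      show ?case unfolding e1 e2 by (simp add: algebra_simps)
    qed
    have key: "inner2 y (\<lambda>w. cnj (\<phi> w) * p w) = z * inner2 y p - c * inner2 y r - c * cnj m * inner2 y E"
      if yL: "y \<in> L2" for y
    proof -
      have [measurable]: "y \<in> borel_measurable borel" using yL by auto
      have "inner2 y (\<lambda>w. cnj (\<phi> w) * p w) = inner2 y (\<lambda>w. cnj z * p w - c * (r w + m * E w))"
        by (rule inner2_cong_right) (use cpp in auto)
      also have "\<dots> = inner2 y (\<lambda>w. cnj z * p w) - inner2 y (\<lambda>w. c * (r w + m * E w))"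
        using yL pL rmEL by (intro inner2_diff_right L2_cmult)
      also have "\<dots> = z * inner2 y p - c * (inner2 y r + cnj m * inner2 y E)"
        using yL rL mEL cs by (simp add: inner2_cmult_right inner2_add_right)
      finally show ?thesis by (simp add: algebra_simps)
    qed
    have "inner2 X k = inner2 (\<lambda>w. f w * W w) (Uop k)"
      unfolding X_def using fWL kL by (rule U_inner)
    also have "\<dots> = inner2 W B"
      unfolding inner2_def B_def by (simp add: mult.commute mult.left_commute)
    also have "\<dots> = inner2 W p"
      unfolding p_def using BL WH by (rule inner_P_right[symmetric])
    also have "\<dots> = inner2 (\<lambda>w. g w * Q w) p"
      unfolding W_def using gQL pH by (rule inner_P)
    also have "\<dots> = inner2 (\<lambda>w. g w * (\<phi> w * h w)) p"
    proof (rule inner2_cong_left)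
      have [measurable]: "Q \<in> borel_measurable borel" "h \<in> borel_measurable borel" using QL hL by auto
      show "(\<lambda>w. g w * Q w) \<in> borel_measurable borel" "(\<lambda>w. g w * (\<phi> w * h w)) \<in> borel_measurable borel"
        by measurable
      show "p \<in> borel_measurable borel" by measurable
      show "AE w in circ. g w * Q w = g w * (\<phi> w * h w)"
        using P_id[OF phL] unfolding Q_def by eventually_elim simp
    qed
    also have "\<dots> = inner2 gh (\<lambda>w. cnj (\<phi> w) * p w)"
      unfolding inner2_def gh_def by (simp add: mult.commute mult.left_commute)
    also have "\<dots> = z * inner2 gh p - c * inner2 gh r - c * cnj m * inner2 gh E"
      using ghL by (rule key)
    finally have LX: "inner2 X k = z * inner2 gh p - c * inner2 gh r - c * cnj m * inner2 gh E" .
    have psk: "(\<lambda>w. cnj (t\<phi> w) * k w) \<in> H2" unfolding t\<phi>_def \<phi>_def using k z by (rule H2_phistar_mult)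
    have phPgh: "(\<lambda>w. \<phi> w * Pgh w) \<in> H2" unfolding \<phi>_def using PghH z by (rule H2_phi_mult)
    have "inner2 (Pproj (\<lambda>w. t\<phi> w * V w)) k = inner2 (\<lambda>w. t\<phi> w * V w) k"
      using tVL k by (rule inner_P)
    also have "\<dots> = inner2 V (\<lambda>w. cnj (t\<phi> w) * k w)"
      unfolding inner2_def by (simp add: mult.commute mult.left_commute)
    also have "\<dots> = inner2 (Uop (\<lambda>w. f w * Pgh w)) (\<lambda>w. cnj (t\<phi> w) * k w)"
      unfolding V_def using L2_U[OF fPghL] psk by (rule inner_P)
    also have "\<dots> = inner2 (\<lambda>w. f w * Pgh w) (Uop (\<lambda>w. cnj (t\<phi> w) * k w))"
      using fPghL H2_L2[OF psk] by (rule U_inner)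
    also have "Uop (\<lambda>w. cnj (t\<phi> w) * k w) = (\<lambda>w. cnj (\<phi> w) * Uop k w)"
      unfolding t\<phi>_def \<phi>_def by (rule U_phistar)
    also have "inner2 (\<lambda>w. f w * Pgh w) (\<lambda>w. cnj (\<phi> w) * Uop k w) = inner2 (\<lambda>w. \<phi> w * Pgh w) B"
      unfolding inner2_def B_def by (simp add: mult.commute mult.left_commute)
    also have "\<dots> = inner2 (\<lambda>w. \<phi> w * Pgh w) p"
      unfolding p_def using BL phPgh by (rule inner_P_right[symmetric])
    also have "\<dots> = inner2 Pgh (\<lambda>w. cnj (\<phi> w) * p w)"
      unfolding inner2_def by (simp add: mult.commute mult.left_commute)
    also have "\<dots> = z * inner2 Pgh p - c * inner2 Pgh r - c * cnj m * inner2 Pgh E"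
      using PghL by (rule key)
    also have "inner2 Pgh p = inner2 gh p" unfolding Pgh_def using ghL pH by (rule inner_P)
    also have "inner2 Pgh r = inner2 gh r" unfolding Pgh_def using ghL rH by (rule inner_P)
    also have "inner2 Pgh E = 0" unfolding E_def using PghH z by (rule E_orth)
    finally have R1: "inner2 (Pproj (\<lambda>w. t\<phi> w * V w)) k = z * inner2 gh p - c * inner2 gh r" by simp
    have "inner2 HK k = inner2 (Uop (\<lambda>w. f w * kz z w)) k"
      unfolding HK_def using L2_U[OF fkzL] k by (rule inner_P)
    also have "\<dots> = inner2 (\<lambda>w. f w * kz z w) (Uop k)" using fkzL kL by (rule U_inner)
    also have "\<dots> = inner2 (kz z) B"
      unfolding inner2_def B_def by (simp add: mult.commute mult.left_commute)
    also have "\<dots> = inner2 (kz z) p"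
      unfolding p_def using BL kzH by (rule inner_P_right[symmetric])
    also have "\<dots> = cnj (inner2 p (kz z))" by (rule inner2_cnj)
    also have "inner2 p (kz z) = s * m"
    proof -
      have "inner2 p (kz z) = integral\<^sup>L circ (\<lambda>w. s * (p w / (1 - z * cnj w)))"
        unfolding inner2_def cnj_kz s_def by (simp add: mult.commute mult.left_commute)
      also have "\<dots> = s * m" unfolding m_def by (rule integral_mult_right_zero)
      finally show ?thesis .
    qed
    finally have HKk: "inner2 HK k = s * cnj m" using cs by simp
    have "inner2 h A = inner2 (Hank g h) (kz (cnj z))" using Aadj[OF h] by simp
    also have "\<dots> = inner2 (Uop gh) (kz (cnj z))"
      unfolding Hank_def gh_def using L2_U[OF ghL[unfolded gh_def]] kzbH by (rule inner_P)
    also have "\<dots> = inner2 gh (Uop (kz (cnj z)))" using ghL kzbL by (rule U_inner)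
    also have "\<dots> = inner2 gh (\<lambda>w. s * E w)" unfolding U_kzbar E_def s_def ..
    also have "\<dots> = s * inner2 gh E" using cs by (simp add: inner2_cmult_right)
    finally have hA: "inner2 h A = s * inner2 gh E" .
    have "inner2 R k = inner2 (Pproj (\<lambda>w. t\<phi> w * V w)) k - inner2 (\<lambda>w. inner2 h A * HK w) k"
      unfolding R_def using P_L2[OF tVL] L2_cmult[OF HKL] kL by (rule inner2_diff_left)
    also have "\<dots> = inner2 X k"
      unfolding inner2_cmult_left R1 HKk hA LX ss[symmetric] by (simp add: algebra_simps)
    finally have "inner2 R k = inner2 X k" .
    then show "inner2 (\<lambda>w. X w - R w) k = 0"
      using XL RL kL by (simp add: inner2_diff_left)
  qed
  have ae: "AE w in circ. Pproj X w = R w" by (rule P_unique[OF XL RH orth])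
  have r: "\<And>w. Toep (tildeop (phiz z)) (K h) w
             - rank1 (Hank f (kz z)) (adjH2 (Hank g) (kz (cnj z))) h w = R w"
    using fun_cong[OF rhs] by simp
  show "AE w in circ. K (Toep (phiz z) h) w = Toep (tildeop (phiz z)) (K h) w
             - rank1 (Hank f (kz z)) (adjH2 (Hank g) (kz (cnj z))) h w"
    unfolding lhs r by (rule ae)
qed



end
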